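(* Consider the plant $\dot x=Ax+Bu+Ep(q)+E_ww$, $y=Cx+Du$, $q=C_qx$ (i.e. no measurement noise, $F_w=\mathbf 0$), where $p$ is globally Lipschitz continuous and the disturbance satisfies $\|w\|_\infty\le\omega_0$ for an arbitrary given $\omega_0>0$. Suppose there exist $\alpha_0>0$, $\mu>0$, a symmetric $P>0$ in $\mathbb{R}^{2n_x\times2n_x}$ and matrices $K_1,K_2,L_1,L_2$ such that, for the continuous-time closed-loop system formed by the plant, the observer $\dot{\hat x}=A\hat x+Bu+Ep(\hat q+L_1(\hat y-y))+L_2(\hat y-y)$, $\hat y=C\hat x+Du$, $\hat q=C_q\hat x$, and the controller $u=K_1\hat x+K_2p(C_q\hat x)$, the function $V(z)=z^\top Pz$ with $z=(x^\top,(x-\hat x)^\top)^\top$ satisfies $\dot V\le-\alpha_0V$ along its trajectories when $w\equiv0$. Now consider the event-triggered implementation: the same observer (driven by the actually applied input $u$), triggering times $t_0=0<t_1<t_2<\cdots$, $\hat x_s(t)=\hat x(t_k)$ for $t\in[t_k,t_{k+1})$, input $u(t)=K_1\hat x_s(t)+K_2p(C_q\hat x_s(t))$, and the triggering rule $t_{k+1}=\inf\{t\mid t\ge t_k+\tau,\ \|\hat x_s(t)-\hat x(t)\|>\sigma\|\hat x(t)\|+\epsilon\}$. Then positive numbers $\tau,\sigma,\epsilon$ can be chosen such that this event-triggered closed-loop system is input-to-state practically stable with respect to $w$.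
   Context: Plant: $x\in\mathbb{R}^{n_x}$ state, $u\in\mathbb{R}^{n_u}$ input, $y\in\mathbb{R}^{n_y}$ output, $w\in\mathbb{R}^{n_w}$ unknown measurable disturbance; $A,B,C,D,C_q,E,E_w$ constant real matrices of compatible sizes; $p:\mathbb{R}^{n_q}\to\mathbb{R}^{n_p}$ known with $p(0)=0$. The closed loop is input-to-state practically stable (ISpS) w.r.t. $w$ if there exist $\beta_1\in\mathcal{KL}$, $\beta_2\in\mathcal K$ and a constant $d\ge0$ such that for every initial condition $(x(0),\hat x(0))$ and every admissible disturbance $w$, $\|z(t)\|\le\beta_1(\|z(0)\|,t)+\beta_2(\|w\|_\infty)+d$ for all $t\ge0$, where $z=(x^\top,(x-\hat x)^\top)^\top$ and $\|w\|_\infty=\sup_{t\ge0}\|w(t)\|$. *)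

theory Defs
  imports "HOL-Analysis.Analysis"
begin

definition class_K :: "(real \<Rightarrow> real) \<Rightarrow> bool" where
  "class_K \<gamma> \<longleftrightarrow> continuous_on {0..} \<gamma> \<and> strict_mono_on {0..} \<gamma> \<and> \<gamma> 0 = 0"

definition class_KL :: "(real \<Rightarrow> real \<Rightarrow> real) \<Rightarrow> bool" where
  "class_KL \<beta> \<longleftrightarrow>
     (\<forall>t\<ge>0. class_K (\<lambda>r. \<beta> r t)) \<and>
     (\<forall>r\<ge>0. (\<forall>s t. 0 \<le> s \<longrightarrow> s \<le> t \<longrightarrow> \<beta> r t \<le> \<beta> r s) \<and> ((\<beta> r) \<longlongrightarrow> 0) at_top)"

definition stack :: "real^'n \<Rightarrow> real^'n \<Rightarrow> real^('n + 'n)" where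
  "stack a b = (\<chi> i. case i of Inl j \<Rightarrow> a $ j | Inr j \<Rightarrow> b $ j)"

definition ctrl_input ::
  "real^'x^'u \<Rightarrow> real^'p^'u \<Rightarrow> real^'x^'q \<Rightarrow> (real^'q \<Rightarrow> real^'p) \<Rightarrow> real^'x \<Rightarrow> real^'u" where
  "ctrl_input K1 K2 Cq p xs = K1 *v xs + K2 *v p (Cq *v xs)"

definition plant_rhs ::
  "real^'x^'x \<Rightarrow> real^'u^'x \<Rightarrow> real^'p^'x \<Rightarrow> real^'w^'x \<Rightarrow> real^'x^'q \<Rightarrow> (real^'q \<Rightarrow> real^'p)
   \<Rightarrow> real^'x \<Rightarrow> real^'u \<Rightarrow> real^'w \<Rightarrow> real^'x" where
  "plant_rhs A B E Ew Cq p x u w = A *v x + B *v u + E *v p (Cq *v x) + Ew *v w"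

definition obs_rhs ::
  "real^'x^'x \<Rightarrow> real^'u^'x \<Rightarrow> real^'x^'y \<Rightarrow> real^'u^'y \<Rightarrow> real^'x^'q \<Rightarrow> real^'p^'x
   \<Rightarrow> (real^'q \<Rightarrow> real^'p) \<Rightarrow> real^'y^'q \<Rightarrow> real^'y^'x
   \<Rightarrow> real^'x \<Rightarrow> real^'x \<Rightarrow> real^'u \<Rightarrow> real^'x" where
  "obs_rhs A B C D Cq E p L1 L2 x xh u =
     (let y = C *v x + D *v u; yh = C *v xh + D *v u
      in A *v xh + B *v u + E *v p (Cq *v xh + L1 *v (yh - y)) + L2 *v (yh - y))"

text \<open>A (Caratheodory) solution on \<open>[0,\<infinity>)\<close> of the event-triggered closed loop.
  Triggering times are extended reals: \<open>tk (Suc k) = \<infinity>\<close> means no further event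
  (infimum of the empty set).  \<open>xs\<close> is the held observer state, \<open>w\<close> an admissible disturbance.\<close>

definition et_solution ::
  "real^'x^'x \<Rightarrow> real^'u^'x \<Rightarrow> real^'x^'y \<Rightarrow> real^'u^'y \<Rightarrow> real^'x^'q \<Rightarrow> real^'p^'x \<Rightarrow> real^'w^'x
   \<Rightarrow> (real^'q \<Rightarrow> real^'p) \<Rightarrow> real^'x^'u \<Rightarrow> real^'p^'u \<Rightarrow> real^'y^'q \<Rightarrow> real^'y^'x
   \<Rightarrow> real \<Rightarrow> real \<Rightarrow> real \<Rightarrow> real
   \<Rightarrow> (real \<Rightarrow> real^'x) \<Rightarrow> (real \<Rightarrow> real^'x) \<Rightarrow> (real \<Rightarrow> real^'x) \<Rightarrow> (nat \<Rightarrow> ereal) \<Rightarrow> (real \<Rightarrow> real^'w)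
   \<Rightarrow> bool" where
  "et_solution A B C D Cq E Ew p K1 K2 L1 L2 \<tau> \<sigma> \<epsilon> \<omega>0 x xh xs tk w \<longleftrightarrow>
     w \<in> borel_measurable (lebesgue_on {0..}) \<and> (\<forall>s\<ge>0. norm (w s) \<le> \<omega>0) \<and>
     tk 0 = 0 \<and>
     (\<forall>k. tk (Suc k) = Inf {ereal s | s. tk k + ereal \<tau> \<le> ereal s \<and>
             norm (xh (real_of_ereal (tk k)) - xh s) > \<sigma> * norm (xh s) + \<epsilon>}) \<and>
     (\<forall>k s. tk k \<le> ereal s \<and> ereal s < tk (Suc k) \<longrightarrow> xs s = xh (real_of_ereal (tk k))) \<and>
     continuous_on {0..} x \<and> continuous_on {0..} xh \<and>
     (\<forall>t\<ge>0. ((\<lambda>s. plant_rhs A B E Ew Cq p (x s) (ctrl_input K1 K2 Cq p (xs s)) (w s))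
                 has_integral (x t - x 0)) {0..t}) \<and>
     (\<forall>t\<ge>0. ((\<lambda>s. obs_rhs A B C D Cq E p L1 L2 (x s) (xh s) (ctrl_input K1 K2 Cq p (xs s)))
                 has_integral (xh t - xh 0)) {0..t})"

end

theory Submission
  imports Defs
begin

lemma stack_nth[simp]: "stack a b $ Inl i = a $ i" "stack a b $ Inr i = b $ i"
  by (simp_all add: stack_def)
lemma sum_vec_eqI: "(\<And>i. u $ Inl i = v $ Inl i) \<Longrightarrow> (\<And>i. u $ Inr i = v $ Inr i) \<Longrightarrow> u = v"
  by (metis vec_eq_iff sum.exhaust)
lemma stack_add: "stack a b + stack c d = stack (a + c) (b + d)"
  by (rule sum_vec_eqI) simp_all
lemma stack_inner: "stack a b \<bullet> stack c d = a \<bullet> c + b \<bullet> d"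
proof -
  have "stack a b \<bullet> stack c d = (\<Sum>i\<in>range Inl \<union> range Inr. stack a b $ i * stack c d $ i)"
    unfolding inner_vec_def by (simp add: UNIV_sum)
  also have "\<dots> = (\<Sum>i\<in>range Inl. stack a b $ i * stack c d $ i) + (\<Sum>i\<in>range Inr. stack a b $ i * stack c d $ i)"
    by (rule sum.union_disjoint) auto
  also have "\<dots> = a \<bullet> c + b \<bullet> d"
    by (simp add: sum.reindex inner_vec_def)
  finally show ?thesis .
qed


lemma norm_stack_sq: "(norm (stack a b))\<^sup>2 = (norm a)\<^sup>2 + (norm b)\<^sup>2"
  by (simp only: power2_norm_eq_inner stack_inner)
lemma norm_stack_ge1: "norm a \<le> norm (stack a b)"
proof (rule power2_le_imp_le[OF _ norm_ge_zero])
  show "(norm a)\<^sup>2 \<le> (norm (stack a b))\<^sup>2" unfolding norm_stack_sq by simp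
qed
lemma norm_stack_ge2: "norm b \<le> norm (stack a b)"
proof (rule power2_le_imp_le[OF _ norm_ge_zero])
  show "(norm b)\<^sup>2 \<le> (norm (stack a b))\<^sup>2" unfolding norm_stack_sq by simp
qed
lemma norm_stack_le: "norm (stack a b) \<le> norm a + norm b"
proof (rule power2_le_imp_le)
  show "(norm (stack a b))\<^sup>2 \<le> (norm a + norm b)\<^sup>2"
    unfolding norm_stack_sq power2_sum by simp
  show "0 \<le> norm a + norm b" by simp
qed


lemma linear_stack1: "linear (\<lambda>a. stack a 0)"
  by (rule linearI; rule sum_vec_eqI) simp_all
lemma linear_stack2: "linear (\<lambda>a. stack 0 a)"
  by (rule linearI; rule sum_vec_eqI) simp_all

lemma stack_integral:
  assumes "(f has_integral I) S" "(g has_integral J) S"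
  shows "((\<lambda>s. stack (f s) (g s)) has_integral stack I J) S"
proof -
  have 1: "((\<lambda>s. stack (f s) 0) has_integral stack I 0) S"
    using has_integral_linear[OF assms(1) linear_stack1[THEN linear_conv_bounded_linear[THEN iffD1]]]
    by (simp add: o_def)
  have 2: "((\<lambda>s. stack 0 (g s)) has_integral stack 0 J) S"
    using has_integral_linear[OF assms(2) linear_stack2[THEN linear_conv_bounded_linear[THEN iffD1]]]
    by (simp add: o_def)
  from has_integral_add[OF 1 2] show ?thesis by (simp add: stack_add)
qed




lemma P_sym_inner:
  fixes P :: "real^'n^'n"
  assumes "transpose P = P"
  shows "a \<bullet> (P *v b) = b \<bullet> (P *v a)"
proof -
  have "a \<bullet> (P *v b) = (a v* P) \<bullet> b" by (simp add: dot_lmul_matrix)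
  also have "a v* P = P *v a" using vector_transpose_matrix[of a P] assms by simp
  finally show ?thesis by (simp add: inner_commute)
qed

lemma quad_diff:
  fixes P :: "real^'n^'n"
  assumes "transpose P = P"
  shows "b \<bullet> (P *v b) - a \<bullet> (P *v a) = (b - a) \<bullet> (P *v (b + a))"
  using P_sym_inner[OF assms, of a b]
  by (simp add: matrix_vector_right_distrib inner_diff_left inner_add_right)




lemma mat_bound: "\<exists>c>0. \<forall>x. norm ((M::real^'a^'b) *v x) \<le> c * norm x"
  using bounded_linear.pos_bounded[OF matrix_vector_mul_bounded_linear[of M]]
  by (metis mult.commute)

lemma quad_upper:
  fixes P :: "real^'n^'n"
  shows "\<exists>M>0. \<forall>z. z \<bullet> (P *v z) \<le> M * (norm z)\<^sup>2 \<and> norm (P *v z) \<le> M * norm z"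
proof -
  obtain c where c: "c>0" "\<forall>x. norm (P *v x) \<le> c * norm x" using mat_bound by blast
  { fix z :: "real^'n"
    have "z \<bullet> (P *v z) \<le> norm z * norm (P *v z)" by (rule order_trans[OF _ Cauchy_Schwarz_ineq2]) simp
    also have "\<dots> \<le> norm z * (c * norm z)" using c by (simp add: mult_left_mono)
    finally have "z \<bullet> (P *v z) \<le> c * (norm z)\<^sup>2" by (simp add: power2_eq_square mult.commute mult.left_commute) }
  then show ?thesis using c by blast
qed



lemma quad_lower:
  fixes P :: "real^'n^'n"
  assumes "\<forall>z. z \<noteq> 0 \<longrightarrow> z \<bullet> (P *v z) > 0"
  shows "\<exists>m>0. \<forall>z. m * (norm z)\<^sup>2 \<le> z \<bullet> (P *v z)"
proof -
  have cont: "continuous_on (sphere 0 1) (\<lambda>z. z \<bullet> (P *v z))"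
    by (intro continuous_intros linear_continuous_on matrix_vector_mul_bounded_linear)
  have ne: "sphere (0::real^'n) 1 \<noteq> {}" by simp
  obtain u where u: "u \<in> sphere 0 1" and umin: "\<forall>z\<in>sphere 0 1. u \<bullet> (P *v u) \<le> z \<bullet> (P *v z)"
    using continuous_attains_inf[OF compact_sphere ne cont] by blast
  have "u \<noteq> 0" using u by auto
  then have mpos: "u \<bullet> (P *v u) > 0" using assms by auto
  show ?thesis
  proof (intro exI[of _ "u \<bullet> (P *v u)"] conjI allI mpos)
    fix z :: "real^'n"
    show "u \<bullet> (P *v u) * (norm z)\<^sup>2 \<le> z \<bullet> (P *v z)"
    proof (cases "z = 0")
      case True then show ?thesis by simp
    next
      case False
      let ?v = "(1/norm z) *\<^sub>R z"
      have "?v \<in> sphere 0 1" using False by auto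
      then have "u \<bullet> (P *v u) \<le> ?v \<bullet> (P *v ?v)" using umin by blast
      also have "?v \<bullet> (P *v ?v) = (z \<bullet> (P *v z)) / (norm z)\<^sup>2"
        by (simp add: matrix_vector_mult_scaleR power2_eq_square)
      finally show ?thesis using False by (simp add: pos_le_divide_eq)
    qed
  qed
qed

lemma le_of_eps:
  fixes x y c :: real
  assumes "c \<ge> 0" "\<And>\<eta>. \<eta> > 0 \<Longrightarrow> x \<le> y + \<eta> * c"
  shows "x \<le> y"
proof (rule ccontr)
  assume "\<not> x \<le> y"
  then have xy: "x - y > 0" by simp
  define \<eta> where "\<eta> = (x - y) / (2 * (c + 1))"
  have "\<eta> > 0" using xy assms(1) by (simp add: \<eta>_def)
  then have "x \<le> y + \<eta> * c" using assms(2) by blast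
  moreover have "\<eta> * c < x - y"
  proof -
    have A: "\<eta> * c \<le> \<eta> * (c + 1)" using \<open>\<eta> > 0\<close> by simp
    have B: "\<eta> * (c + 1) = (x - y) / 2" using assms(1) by (simp add: \<eta>_def field_simps)
    have C: "\<eta> * c \<le> (x - y) / 2" using A B by simp
    show ?thesis using C xy by argo
  qed
  ultimately show False by linarith
qed

lemma mono_dini:
  fixes F :: "real \<Rightarrow> real"
  assumes ab: "a \<le> b" and cont: "continuous_on {a..b} F"
    and D: "\<forall>t\<in>{a..<b}. \<forall>\<eta>>0. \<exists>\<delta>>0. \<forall>h. 0 < h \<longrightarrow> h < \<delta> \<longrightarrow> F (t + h) \<le> F t + \<eta> * h"
  shows "F b \<le> F a"
proof (rule le_of_eps[of "b - a"])
  show "0 \<le> b - a" using ab by simp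
  fix \<eta> :: real assume "\<eta> > 0"
  define S where "S = {s \<in> {a..b}. F s \<le> F a + \<eta> * (s - a)}"
  have closedS: "closed S" unfolding S_def
    by (rule continuous_on_closed_Collect_le[OF cont]) (auto intro!: continuous_intros)
  have aS: "a \<in> S" using ab by (simp add: S_def)
  have bdd: "bdd_above S" unfolding S_def by (rule bdd_aboveI[of _ b]) auto
  define s where "s = Sup S"
  have sS: "s \<in> S" unfolding s_def using closed_contains_Sup[OF _ bdd closedS] aS by blast
  have "s = b"
  proof (rule ccontr)
    assume "s \<noteq> b"
    with sS have sb: "s < b" "a \<le> s" by (auto simp: S_def)
    then obtain \<delta> where \<delta>: "\<delta> > 0" "\<forall>h. 0 < h \<longrightarrow> h < \<delta> \<longrightarrow> F (s + h) \<le> F s + \<eta> * h"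
      using D \<open>\<eta> > 0\<close> by force
    define h where "h = min (\<delta>/2) ((b - s)/2)"
    have h1: "h \<le> \<delta>/2" "h \<le> (b - s)/2" "0 < h"
      unfolding h_def using \<delta> sb by (auto simp: min_def)
    then have h: "0 < h" "h < \<delta>" "s + h \<le> b" using \<delta> by argo+
    have "F (s + h) \<le> F a + \<eta> * (s + h - a)"
      using \<delta>(2) h sS by (fastforce simp: S_def algebra_simps)
    then have "s + h \<in> S" using h sb by (simp add: S_def)
    then have "s + h \<le> s" unfolding s_def using bdd by (rule cSup_upper)
    then show False using h by simp
  qed
  then show "F b \<le> F a + \<eta> * (b - a)" using sS by (simp add: S_def)
qed

lemma exp_one_minus: "exp x * (1 - x) \<le> (1::real)"
proof -
  have "1 - x \<le> exp (- x)" using exp_ge_add_one_self[of "-x"] by simp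
  then have "exp x * (1 - x) \<le> exp x * exp (-x)" by (simp add: mult_left_mono)
  then show ?thesis by (simp add: exp_minus)
qed

lemma comparison:
  fixes \<phi> :: "real \<Rightarrow> real"
  assumes lam: "\<rho> > 0" and ab: "a \<le> b" and cont: "continuous_on {a..b} \<phi>"
    and D: "\<forall>t\<in>{a..<b}. \<forall>\<eta>>0. \<exists>\<delta>>0. \<forall>h. 0 < h \<longrightarrow> h < \<delta> \<longrightarrow>
              \<phi> (t + h) \<le> \<phi> t + h * (- \<rho> * \<phi> t + c + \<eta>)"
  shows "max (\<phi> b - c/\<rho>) 0 \<le> exp (- \<rho> * (b - a)) * max (\<phi> a - c/\<rho>) 0"
proof -
  define F where "F t = exp (\<rho> * t) * max (\<phi> t - c/\<rho>) 0" for t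
  have contF: "continuous_on {a..b} F" unfolding F_def
    by (intro continuous_intros cont)
  have DF: "\<forall>t\<in>{a..<b}. \<forall>\<eta>>0. \<exists>\<delta>>0. \<forall>h. 0 < h \<longrightarrow> h < \<delta> \<longrightarrow> F (t + h) \<le> F t + \<eta> * h"
  proof (intro ballI allI impI)
    fix t \<eta> :: real assume t: "t \<in> {a..<b}" and \<eta>: "\<eta> > 0"
    define \<eta>' where "\<eta>' = \<eta> / exp (\<rho> * (t + 1))"
    have \<eta>': "\<eta>' > 0" using \<eta> by (simp add: \<eta>'_def)
    obtain \<delta>' where \<delta>': "\<delta>' > 0" "\<forall>h. 0 < h \<longrightarrow> h < \<delta>' \<longrightarrow> \<phi> (t + h) \<le> \<phi> t + h * (- \<rho> * \<phi> t + c + \<eta>')"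
      using D t \<eta>' by blast
    show "\<exists>\<delta>>0. \<forall>h. 0 < h \<longrightarrow> h < \<delta> \<longrightarrow> F (t + h) \<le> F t + \<eta> * h"
    proof (intro exI[of _ "min \<delta>' (min 1 (1/\<rho>))"] conjI allI impI)
      show "0 < min \<delta>' (min 1 (1/\<rho>))" using \<delta>' lam by simp
      fix h :: real assume h0: "0 < h" and hd: "h < min \<delta>' (min 1 (1/\<rho>))"
      define q where "q = \<phi> t - c/\<rho>"
      have lh: "\<rho> * h \<le> 1" using hd lam by (simp add: field_simps)
      have "\<phi> (t + h) - c/\<rho> \<le> \<phi> t + h * (- \<rho> * \<phi> t + c + \<eta>') - c/\<rho>" using \<delta>' h0 hd by simp
      also have "\<dots> = q * (1 - \<rho> * h) + h * \<eta>'" using lam by (simp add: q_def field_simps)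
      finally have 1: "\<phi> (t + h) - c/\<rho> \<le> q * (1 - \<rho> * h) + h * \<eta>'" .
      have 2: "q * (1 - \<rho> * h) \<le> max q 0 * (1 - \<rho> * h)"
        using lh by (intro mult_right_mono) auto
      have mx: "max (\<phi> (t + h) - c/\<rho>) 0 \<le> max q 0 * (1 - \<rho> * h) + h * \<eta>'"
        using 1 2 lh h0 \<eta>' by (auto intro!: add_nonneg_nonneg mult_nonneg_nonneg)
      have e: "exp (\<rho> * (t + h)) = exp (\<rho> * t) * exp (\<rho> * h)" by (simp add: distrib_left exp_add)
      have "F (t + h) \<le> exp (\<rho> * t) * exp (\<rho> * h) * (max q 0 * (1 - \<rho> * h) + h * \<eta>')"
        unfolding F_def e q_def[symmetric] using mx by (intro mult_left_mono) auto
      also have "\<dots> = exp (\<rho> * t) * (max q 0 * (exp (\<rho> * h) * (1 - \<rho> * h))) + exp (\<rho> * t) * exp (\<rho> * h) * h * \<eta>'"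
        by (simp add: algebra_simps)
      also have "\<dots> \<le> exp (\<rho> * t) * (max q 0 * 1) + exp (\<rho> * t) * exp \<rho> * h * \<eta>'"
      proof (intro add_mono mult_left_mono mult_right_mono)
        show "exp (\<rho> * h) * (1 - \<rho> * h) \<le> 1" by (rule exp_one_minus)
        show "exp (\<rho> * h) \<le> exp \<rho>" using hd lam by (simp add: mult_le_cancel_left1 less_imp_le)
      qed (use h0 \<eta>' in auto)
      also have "exp (\<rho> * t) * exp \<rho> * h * \<eta>' = \<eta> * h"
        by (simp add: \<eta>'_def distrib_left exp_add)
      finally show "F (t + h) \<le> F t + \<eta> * h" by (simp add: F_def q_def)
    qed
  qed
  have "F b \<le> F a" by (rule mono_dini[OF ab contF DF])
  then have "exp (\<rho> * b) * max (\<phi> b - c/\<rho>) 0 \<le> exp (\<rho> * a) * max (\<phi> a - c/\<rho>) 0"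
    by (simp add: F_def)
  then have "exp (- \<rho> * b) * (exp (\<rho> * b) * max (\<phi> b - c/\<rho>) 0) \<le> exp (- \<rho> * b) * (exp (\<rho> * a) * max (\<phi> a - c/\<rho>) 0)"
    by (intro mult_left_mono) auto
  then show ?thesis
    by (simp add: mult.assoc[symmetric] exp_add[symmetric] algebra_simps)
qed

lemma continuous_on_stack:
  fixes f g :: "real \<Rightarrow> real^'n"
  assumes "continuous_on S f" "continuous_on S g"
  shows "continuous_on S (\<lambda>t. stack (f t) (g t))"
proof -
  have 1: "continuous_on S (\<lambda>t. stack (f t) 0)"
    by (rule linear_continuous_on_compose[OF assms(1)]) (rule linear_stack1)
  have 2: "continuous_on S (\<lambda>t. stack 0 (g t))"
    by (rule linear_continuous_on_compose[OF assms(2)]) (rule linear_stack2)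
  from continuous_on_add[OF 1 2] show ?thesis by (simp add: stack_add)
qed

lemma obs_simp: "obs_rhs A B C D Cq E p L1 L2 x xh u =
   A *v xh + B *v u + E *v p (Cq *v xh + L1 *v (C *v (xh - x))) + L2 *v (C *v (xh - x))"
proof -
  have "C *v xh + D *v u - (C *v x + D *v u) = C *v (xh - x)"
    by (simp add: matrix_vector_mult_diff_distrib)
  then show ?thesis by (simp add: obs_rhs_def Let_def)
qed

lemma tri4: "norm (a + b + c + d) \<le> norm a + norm b + norm c + (norm (d::'a::real_normed_vector))"
  using norm_triangle_ineq[of "a+b+c" d] norm_triangle_ineq[of "a+b" c] norm_triangle_ineq[of a b] by linarith

lemma lip_p:
  assumes "Lp-lipschitz_on UNIV p"
  shows "norm (p a - p b) \<le> Lp * norm (a - b)"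
  using assms by (auto simp: lipschitz_on_def dist_norm)

lemma mb: "\<forall>v. norm ((M::real^'aa^'bb) *v v) \<le> r * norm v \<Longrightarrow> \<bar>r\<bar> \<le> cm \<Longrightarrow> \<forall>v. norm (M *v v) \<le> cm * norm v"
proof (intro allI)
  fix v :: "real^'aa" assume "\<forall>v. norm (M *v v) \<le> r * norm v" "\<bar>r\<bar> \<le> cm"
  moreover have "r * norm v \<le> cm * norm v"
    using \<open>\<bar>r\<bar> \<le> cm\<close> abs_ge_self[of r] by (intro mult_right_mono) auto
  ultimately show "norm (M *v v) \<le> cm * norm v" by (meson order_trans)
qed

lemma all_mat_bound:
  fixes A :: "real^'x^'x" and B :: "real^'u^'x" and C :: "real^'x^'y"
    and Cq :: "real^'x^'q" and E :: "real^'p^'x" and Ew :: "real^'w^'x"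
    and K1 :: "real^'x^'u" and K2 :: "real^'p^'u" and L1 :: "real^'y^'q" and L2 :: "real^'y^'x"
  assumes Lp: "0 \<le> Lp"
  shows "\<exists>cm\<ge>1. Lp \<le> cm \<and> (\<forall>v. norm (A *v v) \<le> cm * norm v) \<and> (\<forall>v. norm (B *v v) \<le> cm * norm v) \<and>
     (\<forall>v. norm (C *v v) \<le> cm * norm v) \<and> (\<forall>v. norm (Cq *v v) \<le> cm * norm v) \<and>
     (\<forall>v. norm (E *v v) \<le> cm * norm v) \<and> (\<forall>v. norm (Ew *v v) \<le> cm * norm v) \<and>
     (\<forall>v. norm (K1 *v v) \<le> cm * norm v) \<and> (\<forall>v. norm (K2 *v v) \<le> cm * norm v) \<and>
     (\<forall>v. norm (L1 *v v) \<le> cm * norm v) \<and> (\<forall>v. norm (L2 *v v) \<le> cm * norm v)"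
proof -
  obtain a where a: "a > 0" "\<forall>v. norm (A *v v) \<le> a * norm v" using mat_bound by blast
  obtain b where b: "b > 0" "\<forall>v. norm (B *v v) \<le> b * norm v" using mat_bound by blast
  obtain c where c: "c > 0" "\<forall>v. norm (C *v v) \<le> c * norm v" using mat_bound by blast
  obtain cq where cq: "cq > 0" "\<forall>v. norm (Cq *v v) \<le> cq * norm v" using mat_bound by blast
  obtain e where e: "e > 0" "\<forall>v. norm (E *v v) \<le> e * norm v" using mat_bound by blast
  obtain ew where ew: "ew > 0" "\<forall>v. norm (Ew *v v) \<le> ew * norm v" using mat_bound by blast
  obtain k1 where k1: "k1 > 0" "\<forall>v. norm (K1 *v v) \<le> k1 * norm v" using mat_bound by blast
  obtain k2 where k2: "k2 > 0" "\<forall>v. norm (K2 *v v) \<le> k2 * norm v" using mat_bound by blast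
  obtain l1 where l1: "l1 > 0" "\<forall>v. norm (L1 *v v) \<le> l1 * norm v" using mat_bound by blast
  obtain l2 where l2: "l2 > 0" "\<forall>v. norm (L2 *v v) \<le> l2 * norm v" using mat_bound by blast
  define cm where "cm = 1 + Lp + a + b + c + cq + e + ew + k1 + k2 + l1 + l2"
  have c1: "\<bar>a\<bar> \<le> cm" "\<bar>b\<bar> \<le> cm" "\<bar>c\<bar> \<le> cm" "\<bar>cq\<bar> \<le> cm" "\<bar>e\<bar> \<le> cm" "\<bar>ew\<bar> \<le> cm"
    "\<bar>k1\<bar> \<le> cm" "\<bar>k2\<bar> \<le> cm" "\<bar>l1\<bar> \<le> cm" "\<bar>l2\<bar> \<le> cm" "1 \<le> cm" "Lp \<le> cm"
    using a(1) b(1) c(1) cq(1) e(1) ew(1) k1(1) k2(1) l1(1) l2(1) Lp unfolding cm_def by simp_all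
  show ?thesis
    by (intro exI[of _ cm] conjI c1(11) c1(12) mb[OF a(2) c1(1)] mb[OF b(2) c1(2)] mb[OF c(2) c1(3)] mb[OF cq(2) c1(4)]
        mb[OF e(2) c1(5)] mb[OF ew(2) c1(6)] mb[OF k1(2) c1(7)] mb[OF k2(2) c1(8)] mb[OF l1(2) c1(9)] mb[OF l2(2) c1(10)])
qed

lemma cm_pows: "1 \<le> (cm::real) \<Longrightarrow> cm \<le> cm^4 \<and> cm^2 \<le> cm^4 \<and> cm^3 \<le> cm^4 \<and> 1 \<le> cm^4"
  using power_increasing[of 1 4 cm] power_increasing[of 2 4 cm] power_increasing[of 3 4 cm] one_le_power[of cm 4]
  by simp

lemma comb:
  assumes a: "1 \<le> (cm::real)" "0 \<le> n"
  shows "cm*n \<le> cm^4*n" "cm^2*n \<le> cm^4*n" "cm^3*n \<le> cm^4*n" "n \<le> cm^4 * n" "0 \<le> n"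
proof -
  note c = cm_pows[OF a(1)]
  have "1 * n \<le> cm^4 * n" using c a(2) by (intro mult_right_mono) auto
  then show "n \<le> cm^4 * n" by simp
  show "cm*n \<le> cm^4*n" "cm^2*n \<le> cm^4*n" "cm^3*n \<le> cm^4*n" "0 \<le> n"
    using c a(2) by (auto intro: mult_right_mono)
qed

lemma scale_le: "0 \<le> d \<Longrightarrow> a \<le> b \<Longrightarrow> a * d \<le> b * (d::real)"
  by (simp add: mult_right_mono)

locale bnds =
  fixes A :: "real^'x^'x" and B :: "real^'u^'x" and C :: "real^'x^'y" and D :: "real^'u^'y"
    and Cq :: "real^'x^'q" and E :: "real^'p^'x" and Ew :: "real^'w^'x"
    and p :: "real^'q \<Rightarrow> real^'p"
    and K1 :: "real^'x^'u" and K2 :: "real^'p^'u" and L1 :: "real^'y^'q" and L2 :: "real^'y^'x"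
    and cm :: real
  assumes cm1: "1 \<le> cm"
    and pl: "\<And>a b. norm (p a - p b) \<le> cm * norm (a - b)" and p0: "p 0 = 0"
    and bA: "\<And>v. norm (A *v v) \<le> cm * norm v" and bB: "\<And>v. norm (B *v v) \<le> cm * norm v"
    and bC: "\<And>v. norm (C *v v) \<le> cm * norm v" and bCq: "\<And>v. norm (Cq *v v) \<le> cm * norm v"
    and bE: "\<And>v. norm (E *v v) \<le> cm * norm v" and bEw: "\<And>v. norm (Ew *v v) \<le> cm * norm v"
    and bK1: "\<And>v. norm (K1 *v v) \<le> cm * norm v" and bK2: "\<And>v. norm (K2 *v v) \<le> cm * norm v"
    and bL1: "\<And>v. norm (L1 *v v) \<le> cm * norm v" and bL2: "\<And>v. norm (L2 *v v) \<le> cm * norm v"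
begin

abbreviation "ctrl \<equiv> ctrl_input K1 K2 Cq p"
abbreviation "plant \<equiv> plant_rhs A B E Ew Cq p"
abbreviation "obs \<equiv> obs_rhs A B C D Cq E p L1 L2"

definition "cL = 4 * cm^4"

lemma cL_ge: "1 \<le> cL" "cm \<le> cL"
  using cm_pows[OF cm1] by (auto simp: cL_def)

lemma pE: "norm (E *v (p a - p b)) \<le> cm^2 * norm (a - b)"
proof -
  have "norm (E *v (p a - p b)) \<le> cm * norm (p a - p b)" by (rule bE)
  also have "\<dots> \<le> cm * (cm * norm (a - b))" using cm1 pl by (intro mult_left_mono) auto
  finally show ?thesis by (simp add: power2_eq_square)
qed

lemma ctrl_lip: "norm (ctrl a - ctrl b) \<le> cL * norm (a - b)"
proof -
  have eq: "ctrl a - ctrl b = K1 *v (a - b) + K2 *v (p (Cq *v a) - p (Cq *v b))"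
    by (simp add: ctrl_input_def matrix_vector_mult_diff_distrib)
  have 1: "norm (K2 *v (p (Cq *v a) - p (Cq *v b))) \<le> cm^3 * norm (a - b)"
  proof -
    have "norm (K2 *v (p (Cq *v a) - p (Cq *v b))) \<le> cm * norm (p (Cq *v a) - p (Cq *v b))" by (rule bK2)
    also have "\<dots> \<le> cm * (cm * norm (Cq *v a - Cq *v b))" using cm1 pl by (intro mult_left_mono) auto
    also have "Cq *v a - Cq *v b = Cq *v (a - b)" by (simp add: matrix_vector_mult_diff_distrib)
    also have "cm * (cm * norm (Cq *v (a - b))) \<le> cm * (cm * (cm * norm (a - b)))"
      using cm1 bCq by (intro mult_left_mono) auto
    finally show ?thesis by (simp add: power3_eq_cube mult.assoc)
  qed
  have "norm (ctrl a - ctrl b) \<le> cm * norm (a - b) + cm^3 * norm (a - b)"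
    unfolding eq using norm_triangle_ineq bK1 1 by (meson add_mono order_trans)
  also have "\<dots> \<le> cL * norm (a - b)"
    using comb[OF cm1 norm_ge_zero[of "a - b"]] unfolding cL_def by (simp only: mult.assoc distrib_left; linarith?)
  finally show ?thesis .
qed

lemma ctrl0: "ctrl 0 = 0"
  by (simp add: ctrl_input_def p0)

lemma ctrl_bound: "norm (ctrl a) \<le> cL * norm a"
  using ctrl_lip[of a 0] by (simp add: ctrl0)

lemma plant_lip: "norm (plant x u w - plant x' u' w') \<le> cL * (norm (x - x') + norm (u - u') + norm (w - w'))"
proof -
  have eq: "plant x u w - plant x' u' w' = A *v (x - x') + B *v (u - u') + E *v (p (Cq *v x) - p (Cq *v x')) + Ew *v (w - w')"
    by (simp add: plant_rhs_def matrix_vector_mult_diff_distrib)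
  have 1: "norm (E *v (p (Cq *v x) - p (Cq *v x'))) \<le> cm^3 * norm (x - x')"
  proof -
    have "norm (E *v (p (Cq *v x) - p (Cq *v x'))) \<le> cm^2 * norm (Cq *v x - Cq *v x')" by (rule pE)
    also have "Cq *v x - Cq *v x' = Cq *v (x - x')" by (simp add: matrix_vector_mult_diff_distrib)
    also have "cm^2 * norm (Cq *v (x - x')) \<le> cm^2 * (cm * norm (x - x'))"
      using bCq by (intro mult_left_mono) auto
    finally show ?thesis by (simp add: power3_eq_cube power2_eq_square mult.assoc)
  qed
  have "norm (plant x u w - plant x' u' w') \<le> cm * norm (x - x') + cm * norm (u - u') + cm^3 * norm (x - x') + cm * norm (w - w')"
    unfolding eq using tri4 bA bB 1 bEw by (meson add_mono order_trans)
  also have "\<dots> \<le> cL * (norm (x - x') + norm (u - u') + norm (w - w'))"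
    using comb[OF cm1 norm_ge_zero[of "x - x'"]] comb[OF cm1 norm_ge_zero[of "u - u'"]] comb[OF cm1 norm_ge_zero[of "w - w'"]]
    unfolding cL_def by (simp only: mult.assoc distrib_left; linarith?)
  finally show ?thesis .
qed

lemma obs_lip: "norm (obs x xh u - obs x' xh' u') \<le> cL * (norm (x - x') + norm (xh - xh') + norm (u - u'))"
proof -
  define d where "d = (xh - x) - (xh' - x')"
  have nd: "norm d \<le> norm (x - x') + norm (xh - xh')"
    unfolding d_def using norm_triangle_ineq4[of "xh - xh'" "x - x'"] by (simp add: algebra_simps)
  have eq: "obs x xh u - obs x' xh' u' = A *v (xh - xh') + B *v (u - u') +
      E *v (p (Cq *v xh + L1 *v (C *v (xh - x))) - p (Cq *v xh' + L1 *v (C *v (xh' - x')))) + L2 *v (C *v d)"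
    by (simp add: obs_simp d_def matrix_vector_mult_diff_distrib)
  have q: "norm ((Cq *v xh + L1 *v (C *v (xh - x))) - (Cq *v xh' + L1 *v (C *v (xh' - x')))) \<le> cm * norm (xh - xh') + cm^2 * norm d"
  proof -
    have e2: "(Cq *v xh + L1 *v (C *v (xh - x))) - (Cq *v xh' + L1 *v (C *v (xh' - x'))) = Cq *v (xh - xh') + L1 *v (C *v d)"
      by (simp add: d_def matrix_vector_mult_diff_distrib)
    have "norm (L1 *v (C *v d)) \<le> cm * (cm * norm d)"
      using bL1[of "C *v d"] bC[of d] cm1 by (meson mult_left_mono order_trans zero_le_one order_trans)
    then show ?thesis unfolding e2 using bCq[of "xh - xh'"] norm_triangle_ineq
      by (smt (verit) power2_eq_square mult.assoc)
  qed
  have 1: "norm (E *v (p (Cq *v xh + L1 *v (C *v (xh - x))) - p (Cq *v xh' + L1 *v (C *v (xh' - x'))))) \<le> cm^3 * norm (xh - xh') + cm^4 * norm d"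
  proof -
    have "norm (E *v (p (Cq *v xh + L1 *v (C *v (xh - x))) - p (Cq *v xh' + L1 *v (C *v (xh' - x'))))) \<le> cm^2 * (cm * norm (xh - xh') + cm^2 * norm d)"
      using pE q cm1 by (meson mult_left_mono order_trans zero_le_power2)
    then show ?thesis by (simp add: algebra_simps power_numeral_reduce)
  qed
  have 2: "norm (L2 *v (C *v d)) \<le> cm^2 * norm d"
    using bL2[of "C *v d"] bC[of d] cm1 by (smt (verit) mult_left_mono power2_eq_square mult.assoc)
  have "norm (obs x xh u - obs x' xh' u') \<le> cm * norm (xh - xh') + cm * norm (u - u') + (cm^3 * norm (xh - xh') + cm^4 * norm d) + cm^2 * norm d"
    unfolding eq using tri4 bA bB 1 2 by (meson add_mono order_trans)
  also have "\<dots> \<le> cm^4 * norm (xh - xh') + cm^4 * norm (u - u') + (cm^4 * norm (xh - xh') + cm^4 * norm d) + cm^4 * norm d"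
    using cm_pows[OF cm1] by (intro add_mono scale_le) auto
  also have "\<dots> \<le> cm^4 * norm (xh - xh') + cm^4 * norm (u - u') + (cm^4 * norm (xh - xh') + cm^4 * (norm (x - x') + norm (xh - xh'))) + cm^4 * (norm (x - x') + norm (xh - xh'))"
    using nd by (intro add_mono mult_left_mono) auto
  also have "\<dots> \<le> cL * (norm (x - x') + norm (xh - xh') + norm (u - u'))"
    using cm_pows[OF cm1] by (simp add: cL_def algebra_simps)
  finally show ?thesis .
qed

lemma plant0: "plant 0 0 0 = 0" by (simp add: plant_rhs_def p0)
lemma obs0: "obs 0 0 0 = 0" by (simp add: obs_simp p0)

end

locale sol = bnds A B C D Cq E Ew p K1 K2 L1 L2 cm
  for A :: "real^'x^'x" and B :: "real^'u^'x" and C :: "real^'x^'y" and D :: "real^'u^'y"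
    and Cq :: "real^'x^'q" and E :: "real^'p^'x" and Ew :: "real^'w^'x"
    and p :: "real^'q \<Rightarrow> real^'p"
    and K1 :: "real^'x^'u" and K2 :: "real^'p^'u" and L1 :: "real^'y^'q" and L2 :: "real^'y^'x"
    and cm :: real +
  fixes \<tau> \<sigma> \<epsilon> \<omega> :: real and x xh xs :: "real \<Rightarrow> real^'x" and tk :: "nat \<Rightarrow> ereal" and w :: "real \<Rightarrow> real^'w"
  assumes \<tau>: "\<tau> > 0"
    and tk0: "tk 0 = 0"
    and tkS: "\<And>k. tk (Suc k) = Inf {ereal s | s. tk k + ereal \<tau> \<le> ereal s \<and>
             norm (xh (real_of_ereal (tk k)) - xh s) > \<sigma> * norm (xh s) + \<epsilon>}"
    and xs_def: "\<And>k s. tk k \<le> ereal s \<Longrightarrow> ereal s < tk (Suc k) \<Longrightarrow> xs s = xh (real_of_ereal (tk k))"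
    and contx: "continuous_on {0..} x" and contxh: "continuous_on {0..} xh"
    and intx: "\<And>t. t \<ge> 0 \<Longrightarrow> ((\<lambda>s. plant (x s) (ctrl (xs s)) (w s)) has_integral (x t - x 0)) {0..t}"
    and intxh: "\<And>t. t \<ge> 0 \<Longrightarrow> ((\<lambda>s. obs (x s) (xh s) (ctrl (xs s))) has_integral (xh t - xh 0)) {0..t}"
    and wb: "\<And>s. s \<ge> 0 \<Longrightarrow> norm (w s) \<le> \<omega>"
begin

lemma stack_diff: "stack a b - stack c d = stack (a - c) (b - d)"
  by (rule sum_vec_eqI) simp_all

definition "z t = stack (x t) (x t - xh t)"
definition "e t = xs t - xh t"
definition "fx s = plant (x s) (ctrl (xs s)) (w s)"
definition "fh s = obs (x s) (xh s) (ctrl (xs s))"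
definition "dz s = stack (fx s) (fx s - fh s)"
definition "c2 = 11 * cL^2"

lemma int_sub:
  fixes f :: "real \<Rightarrow> real^'x" and F :: "real \<Rightarrow> real^'x"
  assumes I: "\<And>t. t \<ge> 0 \<Longrightarrow> (f has_integral (F t - F 0)) {0..t}" and ab: "0 \<le> a" "a \<le> b"
  shows "(f has_integral (F b - F a)) {a..b}"
proof -
  have ib: "f integrable_on {a..b}"
    using integrable_subinterval_real[OF has_integral_integrable[OF I[of b]], of a b] ab by auto
  then obtain j where j: "(f has_integral j) {a..b}" by blast
  have "(f has_integral ((F a - F 0) + j)) {0..b}"
    by (rule has_integral_combine[OF ab(1) ab(2) I[OF ab(1)] j])
  moreover have "(f has_integral (F b - F 0)) {0..b}" using ab by (intro I) linarith
  ultimately have "(F a - F 0) + j = F b - F 0" by (rule has_integral_unique)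
  then have "j = F b - F a" by (simp add: algebra_simps)
  with j show ?thesis by simp
qed

lemma int_fx: "0 \<le> a \<Longrightarrow> a \<le> b \<Longrightarrow> (fx has_integral (x b - x a)) {a..b}"
  using int_sub[of fx x a b] intx unfolding fx_def by blast
lemma int_fh: "0 \<le> a \<Longrightarrow> a \<le> b \<Longrightarrow> (fh has_integral (xh b - xh a)) {a..b}"
  using int_sub[of fh xh a b] intxh unfolding fh_def by blast
lemma int_dz: "0 \<le> a \<Longrightarrow> a \<le> b \<Longrightarrow> (dz has_integral (z b - z a)) {a..b}"
proof -
  assume ab: "0 \<le> a" "a \<le> b"
  have "((\<lambda>s. stack (fx s) (fx s - fh s)) has_integral stack (x b - x a) ((x b - x a) - (xh b - xh a))) {a..b}"
    by (intro stack_integral has_integral_diff int_fx int_fh ab)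
  moreover have "stack (x b - x a) ((x b - x a) - (xh b - xh a)) = z b - z a"
    by (simp add: z_def stack_diff algebra_simps)
  ultimately show ?thesis unfolding dz_def[abs_def] by simp
qed

lemma nz: "norm (x t) \<le> norm (z t)" "norm (x t - xh t) \<le> norm (z t)" "norm (xh t) \<le> 2 * norm (z t)"
proof -
  show 1: "norm (x t) \<le> norm (z t)" unfolding z_def by (rule norm_stack_ge1)
  show 2: "norm (x t - xh t) \<le> norm (z t)" unfolding z_def by (rule norm_stack_ge2)
  have "norm (xh t) \<le> norm (x t) + norm (x t - xh t)"
    using norm_triangle_ineq4[of "x t" "x t - xh t"] by simp
  then show "norm (xh t) \<le> 2 * norm (z t)" using 1 2 by linarith
qed

lemma nz_diff: "norm (x r - x t) \<le> norm (z r - z t)" "norm (xh r - xh t) \<le> 2 * norm (z r - z t)"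
proof -
  have zd: "z r - z t = stack (x r - x t) ((x r - x t) - (xh r - xh t))"
    by (simp add: z_def stack_diff algebra_simps)
  show 1: "norm (x r - x t) \<le> norm (z r - z t)" unfolding zd by (rule norm_stack_ge1)
  have 2: "norm ((x r - x t) - (xh r - xh t)) \<le> norm (z r - z t)" unfolding zd by (rule norm_stack_ge2)
  have "norm (xh r - xh t) \<le> norm (x r - x t) + norm ((x r - x t) - (xh r - xh t))"
    using norm_triangle_ineq4[of "x r - x t" "(x r - x t) - (xh r - xh t)"] by simp
  then show "norm (xh r - xh t) \<le> 2 * norm (z r - z t)" using 1 2 by linarith
qed

lemma cL_pos: "0 < cL" using cL_ge by linarith

lemma nu: "norm (ctrl (xs s)) \<le> cL * (2 * norm (z s) + norm (e s))"
proof -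
  have "norm (xs s) \<le> norm (xh s) + norm (e s)"
    unfolding e_def using norm_triangle_ineq[of "xh s" "xs s - xh s"] by simp
  also have "\<dots> \<le> 2 * norm (z s) + norm (e s)" using nz(3) by simp
  finally show ?thesis using ctrl_bound[of "xs s"] cL_pos by (meson mult_left_mono less_imp_le order_trans)
qed

lemma nfx: "norm (fx s) \<le> 3 * cL^2 * (norm (z s) + norm (e s) + norm (w s))"
proof -
  have "norm (fx s) \<le> cL * (norm (x s) + norm (ctrl (xs s)) + norm (w s))"
    using plant_lip[of "x s" "ctrl (xs s)" "w s" 0 0 0] by (simp add: fx_def plant0)
  also have "\<dots> \<le> cL * (norm (z s) + cL * (2 * norm (z s) + norm (e s)) + norm (w s))"
    using nz(1)[of s] nu[of s] cL_pos by (intro mult_left_mono add_mono) auto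
  also have "\<dots> \<le> 3 * cL^2 * (norm (z s) + norm (e s) + norm (w s))"
  proof -
    have "cL * norm (z s) \<le> cL^2 * norm (z s)" "cL * norm (w s) \<le> cL^2 * norm (w s)"
      using cL_ge mult_right_mono[of 1 cL "norm (z s)"] mult_right_mono[of 1 cL "norm (w s)"]
      by (auto intro!: mult_left_mono simp: power2_eq_square)
    moreover have "0 \<le> cL^2 * norm (e s)" "0 \<le> cL^2 * norm (w s)" by simp_all
    moreover have "cL * (norm (z s) + cL * (2 * norm (z s) + norm (e s)) + norm (w s)) =
       cL * norm (z s) + 2 * (cL^2 * norm (z s)) + cL^2 * norm (e s) + cL * norm (w s)"
      "3 * cL^2 * (norm (z s) + norm (e s) + norm (w s)) = 3 * (cL^2 * norm (z s)) + 3 * (cL^2 * norm (e s)) + 3 * (cL^2 * norm (w s))"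
      by (simp_all add: algebra_simps power2_eq_square)
    ultimately show ?thesis by linarith
  qed
  finally show ?thesis .
qed

lemma nfh: "norm (fh s) \<le> 5 * cL^2 * (norm (z s) + norm (e s))"
proof -
  have "norm (fh s) \<le> cL * (norm (x s) + norm (xh s) + norm (ctrl (xs s)))"
    using obs_lip[of "x s" "xh s" "ctrl (xs s)" 0 0 0] by (simp add: fh_def obs0)
  also have "\<dots> \<le> cL * (norm (z s) + 2 * norm (z s) + cL * (2 * norm (z s) + norm (e s)))"
    using nz(1)[of s] nz(3)[of s] nu[of s] cL_pos by (intro mult_left_mono add_mono) auto
  also have "\<dots> \<le> 5 * cL^2 * (norm (z s) + norm (e s))"
  proof -
    have "cL * norm (z s) \<le> cL^2 * norm (z s)"
      using cL_ge mult_right_mono[of 1 cL "norm (z s)"]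
      by (auto intro!: mult_left_mono simp: power2_eq_square)
    moreover have "0 \<le> cL^2 * norm (e s)" "0 \<le> cL^2 * norm (z s)" by simp_all
    moreover have "cL * (norm (z s) + 2 * norm (z s) + cL * (2 * norm (z s) + norm (e s))) =
       3 * (cL * norm (z s)) + 2 * (cL^2 * norm (z s)) + cL^2 * norm (e s)"
      "5 * cL^2 * (norm (z s) + norm (e s)) = 5 * (cL^2 * norm (z s)) + 5 * (cL^2 * norm (e s))"
      by (simp_all add: algebra_simps power2_eq_square)
    ultimately show ?thesis by linarith
  qed
  finally show ?thesis .
qed

lemma ndz: "norm (dz s) \<le> c2 * (norm (z s) + norm (e s) + norm (w s))"
proof -
  have "norm (dz s) \<le> norm (fx s) + norm (fx s - fh s)" unfolding dz_def by (rule norm_stack_le)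
  also have "\<dots> \<le> 2 * norm (fx s) + norm (fh s)" using norm_triangle_ineq4[of "fx s" "fh s"] by simp
  also have "\<dots> \<le> 2 * (3 * cL^2 * (norm (z s) + norm (e s) + norm (w s))) + 5 * cL^2 * (norm (z s) + norm (e s))"
    using nfx[of s] nfh[of s] by linarith
  also have "\<dots> \<le> c2 * (norm (z s) + norm (e s) + norm (w s))"
  proof -
    have "0 \<le> cL^2 * norm (w s)" by simp
    moreover have "2 * (3 * cL^2 * (norm (z s) + norm (e s) + norm (w s))) + 5 * cL^2 * (norm (z s) + norm (e s))
      = 11 * (cL^2 * norm (z s)) + 11 * (cL^2 * norm (e s)) + 6 * (cL^2 * norm (w s))"
      "c2 * (norm (z s) + norm (e s) + norm (w s)) = 11 * (cL^2 * norm (z s)) + 11 * (cL^2 * norm (e s)) + 11 * (cL^2 * norm (w s))"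
      by (simp_all add: c2_def algebra_simps)
    ultimately show ?thesis by linarith
  qed
  finally show ?thesis .
qed

lemma nfh2: "norm (fh s) \<le> c2 * (norm (z s) + norm (e s))"
proof -
  have "5 * cL^2 * (norm (z s) + norm (e s)) \<le> c2 * (norm (z s) + norm (e s))"
    unfolding c2_def by (intro mult_right_mono) auto
  then show ?thesis using nfh[of s] by linarith
qed

lemma c2_pos: "c2 > 0" using cL_pos by (simp add: c2_def)

end

context sol begin

lemma tk_step: "tk k + ereal \<tau> \<le> tk (Suc k)"
  unfolding tkS[of k] by (rule Inf_greatest) auto

lemma tk_lb: "ereal (real k * \<tau>) \<le> tk k"
proof (induction k)
  case 0 then show ?case by (simp add: tk0)
next
  case (Suc k)
  have "ereal (real (Suc k) * \<tau>) = ereal (real k * \<tau>) + ereal \<tau>" by (simp add: algebra_simps)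
  also have "\<dots> \<le> tk k + ereal \<tau>" using Suc by (intro add_mono) auto
  also have "\<dots> \<le> tk (Suc k)" by (rule tk_step)
  finally show ?case .
qed

lemma tk_nonneg: "0 \<le> tk k"
proof -
  have "0 \<le> ereal (real k * \<tau>)" using \<tau> by simp
  then show ?thesis using tk_lb[of k] by (rule order_trans)
qed

lemma tk_find:
  assumes t: "t \<ge> 0"
  shows "\<exists>k a. tk k = ereal a \<and> 0 \<le> a \<and> a \<le> t \<and> ereal t < tk (Suc k)"
proof -
  obtain n where n: "t < real n * \<tau>" using ex_less_of_nat_mult[OF \<tau>] by blast
  then have "ereal t < ereal (real n * \<tau>)" by simp
  then have Pn: "ereal t < tk n" using tk_lb[of n] by (rule less_le_trans)
  define n0 where "n0 = (LEAST n. ereal t < tk n)"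
  have P0: "ereal t < tk n0" unfolding n0_def by (rule LeastI[of _ n]) (rule Pn)
  have n0ne: "n0 \<noteq> 0"
  proof
    assume "n0 = 0"
    then have "ereal t < 0" using P0 by (simp add: tk0)
    then show False using t by simp
  qed
  then obtain k where k: "n0 = Suc k" using not0_implies_Suc by blast
  have "\<not> ereal t < tk k"
  proof
    assume "ereal t < tk k"
    then have "n0 \<le> k" unfolding n0_def by (rule Least_le)
    then show False using k by simp
  qed
  then have le: "tk k \<le> ereal t" by simp
  have fin: "\<bar>tk k\<bar> \<noteq> \<infinity>" using le tk_nonneg[of k] by auto
  define a where "a = real_of_ereal (tk k)"
  have ta: "tk k = ereal a" unfolding a_def using ereal_real'[OF fin] by simp
  show ?thesis
    using ta le tk_nonneg[of k] P0 k by (intro exI[of _ k] exI[of _ a]) auto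
qed

lemma xs_at: "tk k = ereal a \<Longrightarrow> a \<le> r \<Longrightarrow> ereal r < tk (Suc k) \<Longrightarrow> xs r = xh a"
  using xs_def[of k r] by simp

lemma trig:
  assumes ta: "tk k = ereal a" and at: "a + \<tau> \<le> t" and tl: "ereal t < tk (Suc k)"
  shows "norm (xh a - xh t) \<le> \<sigma> * norm (xh t) + \<epsilon>"
proof (rule ccontr)
  assume "\<not> ?thesis"
  then have "ereal t \<in> {ereal s | s. tk k + ereal \<tau> \<le> ereal s \<and>
             norm (xh (real_of_ereal (tk k)) - xh s) > \<sigma> * norm (xh s) + \<epsilon>}"
    using ta at by auto
  then have "tk (Suc k) \<le> ereal t" unfolding tkS[of k] by (rule Inf_lower)
  then show False using tl by simp
qed

lemma right_const:
  assumes ta: "tk k = ereal a" and at: "a \<le> t" and tl: "ereal t < tk (Suc k)"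
  shows "\<exists>\<delta>>0. \<forall>r. t \<le> r \<longrightarrow> r < t + \<delta> \<longrightarrow> xs r = xh a"
proof -
  obtain b where b: "ereal t < ereal b" "ereal b < tk (Suc k)" using ereal_dense2[OF tl] by blast
  show ?thesis
  proof (intro exI[of _ "b - t"] conjI allI impI)
    show "0 < b - t" using b by simp
    fix r assume r: "t \<le> r" "r < t + (b - t)"
    then have "ereal r < ereal b" by simp
    then have "ereal r < tk (Suc k)" using b(2) by (rule less_trans)
    moreover have "a \<le> r" using at r by linarith
    ultimately show "xs r = xh a" using xs_at[OF ta] by blast
  qed
qed

end

lemma int_bound:
  fixes f :: "real \<Rightarrow> 'a::real_normed_vector"
  assumes "(f has_integral i) {a..b}" "a \<le> b" "0 \<le> B" "\<And>s. s \<in> {a..b} \<Longrightarrow> norm (f s) \<le> B"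
  shows "norm i \<le> B * (b - a)"
  using has_integral_bound[of B f i a b] assms by (simp add: content_real)

context sol begin

lemma cont_z: "continuous_on {0..} z"
  unfolding z_def[abs_def] by (intro continuous_on_stack continuous_on_diff contx contxh)

lemma e_bound:
  assumes \<theta>: "\<theta> > 0" and \<sigma>: "0 \<le> \<sigma>" "\<sigma> \<le> \<theta>/2" and q1: "\<tau> * c2 \<le> 1/4" and q2: "\<tau> * c2 \<le> \<theta>/2"
    and \<epsilon>: "0 \<le> \<epsilon>" and \<omega>: "0 \<le> \<omega>" and t: "t \<ge> 0"
  shows "norm (e t) \<le> \<theta> * norm (z t) + \<epsilon> + \<omega>"
proof -
  obtain k a where ka: "tk k = ereal a" "0 \<le> a" "a \<le> t" "ereal t < tk (Suc k)"
    using tk_find[OF t] by blast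
  have xsr: "xs r = xh a" if "a \<le> r" "r \<le> t" for r
  proof -
    have "ereal r \<le> ereal t" using that by simp
    then have "ereal r < tk (Suc k)" using ka(4) by (rule le_less_trans)
    then show ?thesis using xs_at[OF ka(1) that(1)] by blast
  qed
  have et: "e t = xh a - xh t" unfolding e_def using xsr[of t] ka by simp
  show ?thesis
  proof (cases "a + \<tau> \<le> t")
    case True
    have "norm (e t) \<le> \<sigma> * norm (xh t) + \<epsilon>" unfolding et by (rule trig[OF ka(1) True ka(4)])
    also have "\<sigma> * norm (xh t) \<le> \<sigma> * (2 * norm (z t))" using \<sigma> nz(3)[of t] by (intro mult_left_mono) auto
    also have "\<sigma> * (2 * norm (z t)) \<le> \<theta> * norm (z t)"
    proof -
      have "(2 * \<sigma>) * norm (z t) \<le> \<theta> * norm (z t)" using \<sigma> by (intro mult_right_mono) auto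
      then show ?thesis by (simp add: mult.assoc mult.left_commute)
    qed
    finally show ?thesis using \<omega> by linarith
  next
    case False
    then have ta: "t - a \<le> \<tau>" by simp
    have ne: "{a..t} \<noteq> {}" using ka by simp
    have sub: "{a..t} \<subseteq> {0..}" using ka by auto
    have cz: "continuous_on {a..t} (\<lambda>r. norm (z r))"
      by (intro continuous_on_norm continuous_on_subset[OF cont_z sub])
    have ce: "continuous_on {a..t} (\<lambda>r. norm (xh a - xh r))"
      by (intro continuous_on_norm continuous_on_diff continuous_on_const continuous_on_subset[OF contxh sub])
    obtain r1 where r1: "r1 \<in> {a..t}" "\<forall>r\<in>{a..t}. norm (z r) \<le> norm (z r1)"
      using continuous_attains_sup[OF compact_Icc ne cz] by blast
    obtain r2 where r2: "r2 \<in> {a..t}" "\<forall>r\<in>{a..t}. norm (xh a - xh r) \<le> norm (xh a - xh r2)"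
      using continuous_attains_sup[OF compact_Icc ne ce] by blast
    define S where "S = norm (z r1)"
    define EE where "EE = norm (xh a - xh r2)"
    have S0: "0 \<le> S" "0 \<le> EE" by (simp_all add: S_def EE_def)
    have er: "norm (e r) \<le> EE" if "r \<in> {a..t}" for r
      using xsr[of r] that r2(2) by (auto simp: e_def EE_def)
    have zr: "norm (z r) \<le> S" if "r \<in> {a..t}" for r using r1(2) that by (simp add: S_def)
    have Ebound: "EE \<le> \<tau> * c2 * (S + EE)"
    proof -
      have i: "(fh has_integral (xh r2 - xh a)) {a..r2}" using r2(1) ka by (intro int_fh) auto
      have "norm (xh r2 - xh a) \<le> c2 * (S + EE) * (r2 - a)"
      proof (rule int_bound[OF i])
        show "a \<le> r2" using r2(1) by simp
        show "0 \<le> c2 * (S + EE)" using c2_pos S0 by simp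
        fix s assume s: "s \<in> {a..r2}"
        then have s': "s \<in> {a..t}" using r2(1) by auto
        have "norm (fh s) \<le> c2 * (norm (z s) + norm (e s))" by (rule nfh2)
        also have "\<dots> \<le> c2 * (S + EE)" using zr[OF s'] er[OF s'] c2_pos by (intro mult_left_mono) auto
        finally show "norm (fh s) \<le> c2 * (S + EE)" .
      qed
      also have "\<dots> \<le> c2 * (S + EE) * \<tau>" using r2(1) ta c2_pos S0 by (intro mult_left_mono) auto
      finally show ?thesis unfolding EE_def by (simp add: norm_minus_commute algebra_simps)
    qed
    have Sbound: "S \<le> norm (z t) + \<tau> * c2 * (S + EE + \<omega>)"
    proof -
      have i: "(dz has_integral (z t - z r1)) {r1..t}" using r1(1) ka by (intro int_dz) auto
      have "norm (z t - z r1) \<le> c2 * (S + EE + \<omega>) * (t - r1)"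
      proof (rule int_bound[OF i])
        show "r1 \<le> t" using r1(1) by simp
        show "0 \<le> c2 * (S + EE + \<omega>)" using c2_pos S0 \<omega> by simp
        fix s assume s: "s \<in> {r1..t}"
        then have s': "s \<in> {a..t}" using r1(1) by auto
        have "norm (dz s) \<le> c2 * (norm (z s) + norm (e s) + norm (w s))" by (rule ndz)
        also have "\<dots> \<le> c2 * (S + EE + \<omega>)"
          using zr[OF s'] er[OF s'] wb[of s] s' ka(2) c2_pos by (intro mult_left_mono add_mono) auto
        finally show "norm (dz s) \<le> c2 * (S + EE + \<omega>)" .
      qed
      also have "\<dots> \<le> c2 * (S + EE + \<omega>) * \<tau>" using r1(1) ta ka c2_pos S0 \<omega> by (intro mult_left_mono) auto
      finally have "norm (z t - z r1) \<le> \<tau> * c2 * (S + EE + \<omega>)" by (simp add: algebra_simps)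
      moreover have "S \<le> norm (z t) + norm (z t - z r1)"
        unfolding S_def using norm_triangle_ineq4[of "z t" "z t - z r1"] by simp
      ultimately show ?thesis by linarith
    qed
    define q where "q = \<tau> * c2"
    have q0: "0 \<le> q" using \<tau> c2_pos by (simp add: q_def)
    have qq: "q \<le> 1/4" "q \<le> \<theta>/2" using q1 q2 by (simp_all add: q_def)
    have p1: "q * S \<le> 1/4 * S" "q * EE \<le> 1/4 * EE" "q * \<omega> \<le> 1/4 * \<omega>" "q * norm (z t) \<le> \<theta> / 2 * norm (z t)"
      by (rule mult_right_mono[OF qq(1)], rule S0, rule mult_right_mono[OF qq(1)], rule S0,
          rule mult_right_mono[OF qq(1) \<omega>], rule mult_right_mono[OF qq(2) norm_ge_zero])
    have E1: "EE \<le> q * S + q * EE" using Ebound by (simp add: q_def distrib_left)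
    have S1: "S \<le> norm (z t) + q * S + q * EE + q * \<omega>" using Sbound by (simp add: q_def distrib_left)
    have S2: "S \<le> 3/2 * norm (z t) + 3/8 * \<omega>" using E1 S1 p1 by linarith
    have "q * S \<le> q * (3/2 * norm (z t) + 3/8 * \<omega>)" using S2 q0 by (rule mult_left_mono)
    then have qS: "q * S \<le> 3/2 * (q * norm (z t)) + 3/8 * (q * \<omega>)" by (simp add: algebra_simps)
    have "EE \<le> \<theta> * norm (z t) + \<omega>" using E1 qS p1 S0 \<omega> by linarith
    moreover have "norm (e t) \<le> EE" using er[of t] ka by simp
    ultimately show ?thesis using \<epsilon> by linarith
  qed
qed

end

lemma int_upper:
  fixes f :: "real \<Rightarrow> real"
  assumes "(f has_integral i) {a..b}" "a \<le> b" "\<And>s. s \<in> {a..b} \<Longrightarrow> f s \<le> K"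
  shows "i \<le> K * (b - a)"
proof -
  note hc = has_integral_const_real[of K a b]
  from has_integral_le[OF assms(1) hc] assms(3) show ?thesis
    using assms(2) by (simp add: content_real mult.commute)
qed

locale lyp = sol A B C D Cq E Ew p K1 K2 L1 L2 cm \<tau> \<sigma> \<epsilon> \<omega> x xh xs tk w
  for A :: "real^'x^'x" and B :: "real^'u^'x" and C :: "real^'x^'y" and D :: "real^'u^'y"
    and Cq :: "real^'x^'q" and E :: "real^'p^'x" and Ew :: "real^'w^'x"
    and p :: "real^'q \<Rightarrow> real^'p"
    and K1 :: "real^'x^'u" and K2 :: "real^'p^'u" and L1 :: "real^'y^'q" and L2 :: "real^'y^'x"
    and cm \<tau> \<sigma> \<epsilon> \<omega> :: real and x xh xs :: "real \<Rightarrow> real^'x" and tk :: "nat \<Rightarrow> ereal" and w :: "real \<Rightarrow> real^'w" +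
  fixes P :: "real^('x + 'x)^('x + 'x)" and \<alpha> M :: real
  assumes P_sym: "transpose P = P"
    and MP: "M > 0" "\<And>v. norm (P *v v) \<le> M * norm v"
    and lyap: "\<forall>x xh. let u = ctrl_input K1 K2 Cq p xh;
                          dx = plant_rhs A B E Ew Cq p x u 0;
                          dxh = obs_rhs A B C D Cq E p L1 L2 x xh u;
                          z = stack x (x - xh);
                          dz = stack dx (dx - dxh)
                      in dz \<bullet> (P *v z) + z \<bullet> (P *v dz) \<le> - \<alpha> * (z \<bullet> (P *v z))"
begin

definition "V t = z t \<bullet> (P *v z t)"
definition "Nn t = stack (plant (x t) (ctrl (xh t)) 0) (plant (x t) (ctrl (xh t)) 0 - obs (x t) (xh t) (ctrl (xh t)))"

lemma lyapN: "2 * (Nn t \<bullet> (P *v z t)) \<le> - \<alpha> * V t"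
proof -
  have "Nn t \<bullet> (P *v z t) + z t \<bullet> (P *v Nn t) \<le> - \<alpha> * V t"
    using lyap unfolding Let_def V_def Nn_def z_def by blast
  moreover have "z t \<bullet> (P *v Nn t) = Nn t \<bullet> (P *v z t)" by (rule P_sym_inner[OF P_sym])
  ultimately show ?thesis by simp
qed

lemma dev:
  assumes r: "xs r = xs t"
  shows "norm (dz r - Nn t) \<le> 5 * cL * norm (z r - z t) + (3 * cL^2 * norm (e t) + 2 * cL * norm (w r))"
proof -
  let ?u = "ctrl (xh t)"
  have cu: "norm (ctrl (xs r) - ?u) \<le> cL * norm (e t)"
    using ctrl_lip[of "xs t" "xh t"] r by (simp add: e_def)
  have a: "norm (fx r - plant (x t) ?u 0) \<le> cL * (norm (x r - x t) + norm (ctrl (xs r) - ?u) + norm (w r))"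
    unfolding fx_def using plant_lip[of "x r" "ctrl (xs r)" "w r" "x t" ?u 0] by simp
  have b: "norm (fh r - obs (x t) (xh t) ?u) \<le> cL * (norm (x r - x t) + norm (xh r - xh t) + norm (ctrl (xs r) - ?u))"
    unfolding fh_def using obs_lip[of "x r" "xh r" "ctrl (xs r)" "x t" "xh t" ?u] by simp
  have "norm (dz r - Nn t) \<le> norm (fx r - plant (x t) ?u 0) + norm ((fx r - fh r) - (plant (x t) ?u 0 - obs (x t) (xh t) ?u))"
    unfolding dz_def Nn_def stack_diff by (rule norm_stack_le)
  also have "\<dots> \<le> 2 * norm (fx r - plant (x t) ?u 0) + norm (fh r - obs (x t) (xh t) ?u)"
    using norm_triangle_ineq4[of "fx r - plant (x t) ?u 0" "fh r - obs (x t) (xh t) ?u"] by (simp add: algebra_simps)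
  also have "\<dots> \<le> 2 * (cL * (norm (z r - z t) + cL * norm (e t) + norm (w r))) + cL * (norm (z r - z t) + 2 * norm (z r - z t) + cL * norm (e t))"
  proof (intro add_mono mult_left_mono)
    show "norm (fx r - plant (x t) ?u 0) \<le> cL * (norm (z r - z t) + cL * norm (e t) + norm (w r))"
      using a nz_diff(1)[of r t] cu cL_pos by (smt (verit) mult_left_mono)
    show "norm (fh r - obs (x t) (xh t) ?u) \<le> cL * (norm (z r - z t) + 2 * norm (z r - z t) + cL * norm (e t))"
      using b nz_diff[of r t] cu cL_pos by (smt (verit) mult_left_mono)
  qed simp
  also have "\<dots> = 5 * cL * norm (z r - z t) + (3 * cL^2 * norm (e t) + 2 * cL * norm (w r))"
    by (simp add: algebra_simps power2_eq_square)
  finally show ?thesis .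
qed

lemma quadV: "V b - V a = (z b - z a) \<bullet> (P *v (z b + z a))"
  unfolding V_def by (rule quad_diff[OF P_sym])

lemma dV:
  assumes t: "t \<ge> 0" and \<eta>: "\<eta> > 0"
  shows "\<exists>\<delta>>0. \<forall>h. 0 < h \<longrightarrow> h < \<delta> \<longrightarrow>
     V (t + h) \<le> V t + h * (- \<alpha> * V t + 2 * M * norm (z t) * (3 * cL^2 * norm (e t) + 2 * cL * \<omega>) + \<eta>)"
proof -
  obtain k a where ka: "tk k = ereal a" "0 \<le> a" "a \<le> t" "ereal t < tk (Suc k)"
    using tk_find[OF t] by blast
  obtain \<delta>2 where \<delta>2: "\<delta>2 > 0" "\<forall>r. t \<le> r \<longrightarrow> r < t + \<delta>2 \<longrightarrow> xs r = xh a"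
    using right_const[OF ka(1) ka(3) ka(4)] by blast
  have xst: "xs t = xh a" using \<delta>2 by simp
  define G where "G = 3 * cL^2 * norm (e t) + 2 * cL * \<omega>"
  define nz0 where "nz0 = norm (z t)"
  define nN where "nN = norm (Nn t)"
  define R where "R = M * nN + G * M + 5 * cL * M * (2 * nz0 + 1)"
  have \<omega>0: "0 \<le> \<omega>" using wb[of 0] by (meson norm_ge_zero order_trans order_refl)
  have G0: "0 \<le> G" unfolding G_def using cL_pos \<omega>0 by simp
  have R0: "0 \<le> R" unfolding R_def nz0_def nN_def using MP(1) cL_pos G0 by simp
  define \<gamma> where "\<gamma> = min 1 (\<eta> / (R + 1))"
  have \<gamma>0: "0 < \<gamma>" "\<gamma> \<le> 1" using \<eta> R0 by (auto simp: \<gamma>_def)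
  have \<gamma>R: "\<gamma> * R \<le> \<eta>"
  proof -
    have "\<gamma> \<le> \<eta> / (R + 1)" by (simp add: \<gamma>_def)
    then have "\<gamma> * (R + 1) \<le> \<eta>" using R0 by (simp add: pos_le_divide_eq)
    then show ?thesis using \<gamma>0 by (simp add: algebra_simps)
  qed
  obtain \<delta>1 where \<delta>1: "\<delta>1 > 0" "\<forall>r\<in>{0..}. dist r t < \<delta>1 \<longrightarrow> dist (z r) (z t) < \<gamma>"
    using cont_z t \<gamma>0(1) unfolding continuous_on_iff by (metis atLeast_iff)
  show ?thesis
  proof (intro exI[of _ "min \<delta>1 \<delta>2"] conjI allI impI)
    show "0 < min \<delta>1 \<delta>2" using \<delta>1 \<delta>2 by simp
    fix h assume h0: "0 < h" and hd: "h < min \<delta>1 \<delta>2"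
    have near: "norm (z r - z t) < \<gamma>" "xs r = xs t" if "r \<in> {t..t+h}" for r
    proof -
      have "dist r t < \<delta>1" using that hd by (auto simp: dist_real_def)
      moreover have "r \<in> {0..}" using that t by auto
      ultimately show "norm (z r - z t) < \<gamma>" using \<delta>1(2) by (auto simp: dist_norm)
      show "xs r = xs t" using \<delta>2(2) that hd xst by auto
    qed
    define v where "v = P *v (z (t + h) + z t)"
    define \<rho> where "\<rho> = P *v (z (t + h) - z t)"
    have vdec: "v = 2 *\<^sub>R (P *v z t) + \<rho>"
      unfolding v_def \<rho>_def by (simp add: matrix_vector_right_distrib matrix_vector_mult_diff_distrib scaleR_2)
    have g1: "norm (z (t + h) - z t) \<le> \<gamma>" using near(1)[of "t + h"] h0 by simp
    have n\<rho>: "norm \<rho> \<le> M * \<gamma>"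
      unfolding \<rho>_def using MP(2)[of "z (t + h) - z t"] g1 MP(1) by (smt (verit) mult_left_mono)
    have nv: "norm v \<le> 2 * M * nz0 + M * \<gamma>"
    proof -
      have "norm v \<le> norm (2 *\<^sub>R (P *v z t)) + norm \<rho>" unfolding vdec by (rule norm_triangle_ineq)
      also have "norm (2 *\<^sub>R (P *v z t)) \<le> 2 * (M * nz0)" using MP(2)[of "z t"] by (simp add: nz0_def)
      finally show ?thesis using n\<rho> by simp
    qed
    have pw: "dz r \<bullet> v \<le> - \<alpha> * V t + 2 * M * nz0 * G + \<eta>" if r: "r \<in> {t..t+h}" for r
    proof -
      have dr: "norm (dz r - Nn t) \<le> 5 * cL * \<gamma> + G"
      proof -
        have "norm (dz r - Nn t) \<le> 5 * cL * norm (z r - z t) + (3 * cL^2 * norm (e t) + 2 * cL * norm (w r))"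
          by (rule dev[OF near(2)[OF r]])
        also have "\<dots> \<le> 5 * cL * \<gamma> + G"
          unfolding G_def using near(1)[OF r] wb[of r] r t cL_pos
          by (intro add_mono mult_left_mono) auto
        finally show ?thesis .
      qed
      have "dz r \<bullet> v = Nn t \<bullet> v + (dz r - Nn t) \<bullet> v" by (simp add: inner_diff_left)
      also have "Nn t \<bullet> v = 2 * (Nn t \<bullet> (P *v z t)) + Nn t \<bullet> \<rho>" by (simp add: vdec inner_add_right)
      also have "Nn t \<bullet> \<rho> \<le> nN * (M * \<gamma>)"
        unfolding nN_def using Cauchy_Schwarz_ineq2[of "Nn t" \<rho>] n\<rho> by (smt (verit) mult_left_mono norm_ge_zero)
      also have "(dz r - Nn t) \<bullet> v \<le> (5 * cL * \<gamma> + G) * (2 * M * nz0 + M * \<gamma>)"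
      proof -
        have "(dz r - Nn t) \<bullet> v \<le> norm (dz r - Nn t) * norm v" by (rule norm_cauchy_schwarz)
        also have "\<dots> \<le> (5 * cL * \<gamma> + G) * (2 * M * nz0 + M * \<gamma>)"
          using dr nv cL_pos \<gamma>0 G0 by (intro mult_mono) auto
        finally show ?thesis .
      qed
      finally have 1: "dz r \<bullet> v \<le> 2 * (Nn t \<bullet> (P *v z t)) + nN * (M * \<gamma>) + (5 * cL * \<gamma> + G) * (2 * M * nz0 + M * \<gamma>)"
        by simp
      have gg: "5 * cL * M * (\<gamma> * \<gamma>) \<le> 5 * cL * M * \<gamma>"
        using \<gamma>0 cL_pos MP(1) by (intro mult_left_mono) (auto simp: mult_le_cancel_left1)
      have eq: "nN * (M * \<gamma>) + (5 * cL * \<gamma> + G) * (2 * M * nz0 + M * \<gamma>)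
          = 2 * M * nz0 * G + \<gamma> * (M * nN + G * M + 5 * cL * M * (2 * nz0)) + 5 * cL * M * (\<gamma> * \<gamma>)"
        by (simp add: algebra_simps)
      have eq2: "\<gamma> * R = \<gamma> * (M * nN + G * M + 5 * cL * M * (2 * nz0)) + 5 * cL * M * \<gamma>"
        unfolding R_def by (simp add: algebra_simps)
      show ?thesis using 1 lyapN[of t] gg eq eq2 \<gamma>R by linarith
    qed
    have i: "((\<lambda>s. dz s \<bullet> v) has_integral ((z (t + h) - z t) \<bullet> v)) {t..t+h}"
      using has_integral_linear[OF int_dz[of t "t + h"] bounded_linear_inner_left[of v]] t h0
      by (simp add: o_def)
    have "(z (t + h) - z t) \<bullet> v \<le> (- \<alpha> * V t + 2 * M * nz0 * G + \<eta>) * (t + h - t)"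
      by (rule int_upper[OF i]) (use h0 pw in auto)
    then have "V (t + h) - V t \<le> h * (- \<alpha> * V t + 2 * M * nz0 * G + \<eta>)"
      unfolding quadV v_def[symmetric] by (simp add: mult.commute)
    then show "V (t + h) \<le> V t + h * (- \<alpha> * V t + 2 * M * norm (z t) * (3 * cL^2 * norm (e t) + 2 * cL * \<omega>) + \<eta>)"
      unfolding G_def nz0_def by linarith
  qed
qed

end

lemma young: "0 < (c::real) \<Longrightarrow> K * a * s \<le> c * a^2 + K^2 * s^2 / (4 * c)"
proof -
  assume c: "0 < c"
  have "0 \<le> (2 * c * a - K * s)^2" by simp
  then have "4 * c * (K * a * s) \<le> 4 * c * (c * a^2) + K^2 * s^2"
    by (simp add: power2_eq_square algebra_simps)
  then have "K * a * s \<le> (4 * c * (c * a^2) + K^2 * s^2) / (4 * c)" using c by (simp add: pos_le_divide_eq mult.commute)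
  also have "\<dots> = c * a^2 + K^2 * s^2 / (4 * c)" using c by (simp add: field_simps)
  finally show ?thesis .
qed

lemma alg:
  fixes \<alpha> m M cL \<theta> nz ne Vv \<epsilon> \<omega> :: real
  assumes \<alpha>: "\<alpha> > 0" and m: "m > 0" and M: "M > 0" and cL: "1 \<le> cL" and \<theta>: "0 \<le> \<theta>"
    and \<theta>s: "6 * M * cL^2 * \<theta> \<le> \<alpha> * m / 4"
    and mV: "m * nz^2 \<le> Vv" and nz: "0 \<le> nz" and ne: "ne \<le> \<theta> * nz + \<epsilon> + \<omega>" "0 \<le> ne"
    and \<epsilon>: "0 \<le> \<epsilon>" and \<omega>: "0 \<le> \<omega>"
  shows "- \<alpha> * Vv + 2 * M * nz * (3 * cL^2 * ne + 2 * cL * \<omega>)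
         \<le> - (\<alpha>/2) * Vv + (10 * M * cL^2)^2 / (\<alpha> * m) * (\<epsilon> + \<omega>)^2"
proof -
  define K where "K = 10 * M * cL^2"
  have cL2: "cL \<le> cL^2" using cL by (simp add: power2_eq_square)
  have "3 * cL^2 * ne + 2 * cL * \<omega> \<le> 3 * cL^2 * (\<theta> * nz + \<epsilon> + \<omega>) + 2 * cL^2 * \<omega>"
    using ne cL2 \<omega> by (intro add_mono mult_left_mono mult_right_mono) auto
  also have "\<dots> \<le> 3 * cL^2 * \<theta> * nz + 5 * cL^2 * (\<epsilon> + \<omega>)"
    using \<epsilon> by (simp add: algebra_simps)
  finally have 1: "3 * cL^2 * ne + 2 * cL * \<omega> \<le> 3 * cL^2 * \<theta> * nz + 5 * cL^2 * (\<epsilon> + \<omega>)" .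
  have "2 * M * nz * (3 * cL^2 * ne + 2 * cL * \<omega>) \<le> 2 * M * nz * (3 * cL^2 * \<theta> * nz + 5 * cL^2 * (\<epsilon> + \<omega>))"
    using 1 M nz by (intro mult_left_mono) auto
  also have "\<dots> = (6 * M * cL^2 * \<theta>) * nz^2 + K * nz * (\<epsilon> + \<omega>)"
    by (simp add: K_def power2_eq_square algebra_simps)
  also have "(6 * M * cL^2 * \<theta>) * nz^2 \<le> (\<alpha> * m / 4) * nz^2"
    using \<theta>s by (intro mult_right_mono) auto
  also have "K * nz * (\<epsilon> + \<omega>) \<le> (\<alpha> * m / 4) * nz^2 + K^2 * (\<epsilon> + \<omega>)^2 / (4 * (\<alpha> * m / 4))"
    by (rule young) (use \<alpha> m in simp)
  also have "K^2 * (\<epsilon> + \<omega>)^2 / (4 * (\<alpha> * m / 4)) = K^2 / (\<alpha> * m) * (\<epsilon> + \<omega>)^2" by simp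
  finally have 2: "2 * M * nz * (3 * cL^2 * ne + 2 * cL * \<omega>) \<le> (\<alpha> / 2) * (m * nz^2) + K^2 / (\<alpha> * m) * (\<epsilon> + \<omega>)^2"
    by (simp add: algebra_simps)
  have 3: "(\<alpha> / 2) * (m * nz^2) \<le> (\<alpha> / 2) * Vv" using mV \<alpha> by (intro mult_left_mono) auto
  show ?thesis using 2 3 unfolding K_def by linarith
qed

context lyp begin

lemma V_upper: "V t \<le> M * (norm (z t))^2"
proof -
  have "V t \<le> norm (z t) * norm (P *v z t)" unfolding V_def by (rule norm_cauchy_schwarz)
  also have "\<dots> \<le> norm (z t) * (M * norm (z t))" using MP(2) by (intro mult_left_mono) auto
  finally show ?thesis by (simp add: power2_eq_square algebra_simps)
qed

lemma cont_V: "continuous_on S V" if "S \<subseteq> {0..}"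
proof -
  have cz: "continuous_on S z" using continuous_on_subset[OF cont_z that] .
  have cPz: "continuous_on S (\<lambda>s. P *v z s)"
    by (rule linear_continuous_on_compose[OF cz]) (rule bounded_linear.linear[OF matrix_vector_mul_bounded_linear])
  show ?thesis unfolding V_def[abs_def] by (intro continuous_on_inner cz cPz)
qed

lemma final_bound:
  assumes \<alpha>: "\<alpha> > 0" and m: "m > 0" and mP: "\<And>v. m * (norm v)^2 \<le> v \<bullet> (P *v v)"
    and \<theta>: "\<theta> > 0" and \<theta>s: "6 * M * cL^2 * \<theta> \<le> \<alpha> * m / 4"
    and \<sigma>: "0 \<le> \<sigma>" "\<sigma> \<le> \<theta>/2" and q1: "\<tau> * c2 \<le> 1/4" and q2: "\<tau> * c2 \<le> \<theta>/2"
    and \<epsilon>: "0 \<le> \<epsilon>" and t: "t \<ge> 0"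
  shows "norm (z t) \<le> sqrt (M/m) * exp (- (\<alpha>/4) * t) * norm (z 0)
           + sqrt ((10 * M * cL^2)^2 / (\<alpha> * m) / ((\<alpha>/2) * m)) * (\<epsilon> + \<omega>)"
proof -
  have \<omega>: "0 \<le> \<omega>" using wb[of 0] by (meson norm_ge_zero order_trans order_refl)
  define Kc where "Kc = (10 * M * cL^2)^2 / (\<alpha> * m)"
  define cc where "cc = Kc * (\<epsilon> + \<omega>)^2"
  define lr where "lr = \<alpha> / 2"
  have l0: "lr > 0" using \<alpha> by (simp add: lr_def)
  have Kc0: "0 \<le> Kc" using \<alpha> m by (simp add: Kc_def)
  have cc0: "0 \<le> cc" using Kc0 by (simp add: cc_def)
  have Vlow: "m * (norm (z s))^2 \<le> V s" for s unfolding V_def by (rule mP)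
  have pt: "- \<alpha> * V s + 2 * M * norm (z s) * (3 * cL^2 * norm (e s) + 2 * cL * \<omega>) \<le> - lr * V s + cc"
    if s: "s \<ge> 0" for s
    unfolding lr_def cc_def Kc_def
    by (rule alg[OF \<alpha> m MP(1) cL_ge(1) less_imp_le[OF \<theta>] \<theta>s Vlow norm_ge_zero
          e_bound[OF \<theta> \<sigma> q1 q2 \<epsilon> \<omega> s] norm_ge_zero \<epsilon> \<omega>])
  have D: "\<forall>s\<in>{0..<t}. \<forall>\<eta>>0. \<exists>\<delta>>0. \<forall>h. 0 < h \<longrightarrow> h < \<delta> \<longrightarrow> V (s + h) \<le> V s + h * (- lr * V s + cc + \<eta>)"
  proof (intro ballI allI impI)
    fix s \<eta> :: real assume s: "s \<in> {0..<t}" and \<eta>: "\<eta> > 0"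
    then have s0: "s \<ge> 0" by simp
    obtain \<delta> where \<delta>: "\<delta> > 0" "\<forall>h. 0 < h \<longrightarrow> h < \<delta> \<longrightarrow>
       V (s + h) \<le> V s + h * (- \<alpha> * V s + 2 * M * norm (z s) * (3 * cL^2 * norm (e s) + 2 * cL * \<omega>) + \<eta>)"
      using dV[OF s0 \<eta>] by blast
    show "\<exists>\<delta>>0. \<forall>h. 0 < h \<longrightarrow> h < \<delta> \<longrightarrow> V (s + h) \<le> V s + h * (- lr * V s + cc + \<eta>)"
    proof (intro exI[of _ \<delta>] conjI allI impI \<delta>(1))
      fix h assume h: "0 < h" "h < \<delta>"
      have "h * (- \<alpha> * V s + 2 * M * norm (z s) * (3 * cL^2 * norm (e s) + 2 * cL * \<omega>) + \<eta>) \<le> h * (- lr * V s + cc + \<eta>)"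
        using pt[OF s0] h by (intro mult_left_mono) auto
      moreover have "V (s + h) \<le> V s + h * (- \<alpha> * V s + 2 * M * norm (z s) * (3 * cL^2 * norm (e s) + 2 * cL * \<omega>) + \<eta>)"
        using \<delta>(2) h by blast
      ultimately show "V (s + h) \<le> V s + h * (- lr * V s + cc + \<eta>)" by linarith
    qed
  qed
  have cmp: "max (V t - cc/lr) 0 \<le> exp (- lr * (t - 0)) * max (V 0 - cc/lr) 0"
    by (rule comparison[OF l0 t cont_V D]) auto
  have V00: "0 \<le> V 0" using Vlow[of 0] m by (smt (verit) mult_nonneg_nonneg zero_le_power2)
  have "max (V 0 - cc/lr) 0 \<le> V 0" using V00 cc0 l0 by (simp add: max_def)
  then have ub: "exp (- lr * t) * max (V 0 - cc/lr) 0 \<le> exp (- lr * t) * (M * (norm (z 0))^2)"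
    using V_upper[of 0] by (intro mult_left_mono) auto
  have c1: "V t - cc/lr \<le> max (V t - cc/lr) 0" by simp
  have c2: "exp (- lr * (t - 0)) = exp (- lr * t)" by simp
  have cmp2: "max (V t - cc/lr) 0 \<le> exp (- lr * t) * max (V 0 - cc/lr) 0" using cmp unfolding c2 .
  from cmp2 ub c1 have Vt: "V t \<le> exp (- lr * t) * (M * (norm (z 0))^2) + cc/lr" by linarith
  have "m * (norm (z t))^2 \<le> exp (- lr * t) * (M * (norm (z 0))^2) + cc/lr" using Vlow[of t] Vt by linarith
  then have nz2: "(norm (z t))^2 \<le> (M/m) * exp (- lr * t) * (norm (z 0))^2 + cc/(lr * m)"
    using m by (simp add: field_simps)
  define X where "X = sqrt (M/m) * exp (- (\<alpha>/4) * t) * norm (z 0)"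
  define Y where "Y = sqrt (Kc / (lr * m)) * (\<epsilon> + \<omega>)"
  have X0: "0 \<le> X" unfolding X_def using MP(1) m by (intro mult_nonneg_nonneg) auto
  have Y0: "0 \<le> Y" unfolding Y_def using \<epsilon> \<omega> Kc0 l0 m by (intro mult_nonneg_nonneg) auto
  have ee: "(exp (- (\<alpha>/4) * t))^2 = exp (- lr * t)"
    unfolding lr_def power2_eq_square exp_add[symmetric] by (simp add: algebra_simps)
  have s1: "(sqrt (M/m))^2 = M/m" using MP(1) m by (intro real_sqrt_pow2) simp
  have s2: "(sqrt (Kc / (lr * m)))^2 = Kc / (lr * m)" using Kc0 l0 m by (intro real_sqrt_pow2) simp
  have X2: "X^2 = (M/m) * exp (- lr * t) * (norm (z 0))^2"
    unfolding X_def power_mult_distrib ee s1 ..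
  have Y2: "Y^2 = cc/(lr * m)"
    unfolding Y_def power_mult_distrib s2 cc_def by simp
  have XY: "0 \<le> 2 * X * Y" using X0 Y0 by simp
  have "(norm (z t))^2 \<le> (X + Y)^2"
    unfolding power2_sum using nz2 X2 Y2 XY by linarith
  then have "norm (z t) \<le> X + Y" by (rule power2_le_imp_le) (use X0 Y0 in simp)
  then show ?thesis unfolding X_def Y_def Kc_def lr_def .
qed

end

lemma class_K_lin: "c > 0 \<Longrightarrow> class_K (\<lambda>r. c * r)"
  unfolding class_K_def by (auto intro!: continuous_intros simp: strict_mono_on_def)

lemma exp_tendsto0: "a > 0 \<Longrightarrow> ((\<lambda>t. exp (- a * t)) \<longlongrightarrow> (0::real)) at_top"
proof -
  assume a: "a > 0"
  have "filterlim (\<lambda>t. (- a) * t) at_bot at_top"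
    by (rule filterlim_tendsto_neg_mult_at_bot[OF tendsto_const]) (use a in \<open>auto intro: filterlim_ident\<close>)
  from filterlim_compose[OF exp_at_bot this] show ?thesis by simp
qed

lemma class_KL_exp:
  assumes c: "c > 0" and a: "a > 0"
  shows "class_KL (\<lambda>r t. c * exp (- a * t) * r)"
  unfolding class_KL_def
proof (intro conjI allI impI)
  fix t :: real assume "0 \<le> t"
  show "class_K (\<lambda>r. c * exp (- a * t) * r)" using c by (intro class_K_lin) simp
next
  fix r s t :: real assume r: "0 \<le> r" and st: "0 \<le> s" "s \<le> t"
  have "exp (- a * t) \<le> exp (- a * s)" using a st by (simp add: mult_left_mono)
  then show "c * exp (- a * t) * r \<le> c * exp (- a * s) * r"
    using c r by (intro mult_right_mono mult_left_mono) auto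
next
  fix r :: real assume "0 \<le> r"
  have "((\<lambda>t. c * exp (- a * t) * r) \<longlongrightarrow> c * 0 * r) at_top"
    by (intro tendsto_mult tendsto_const exp_tendsto0 a)
  then show "((\<lambda>t. c * exp (- a * t) * r) \<longlongrightarrow> 0) at_top" by simp
qed

theorem theorem4:
  fixes A :: "real^'x^'x" and B :: "real^'u^'x" and C :: "real^'x^'y" and D :: "real^'u^'y"
    and Cq :: "real^'x^'q" and E :: "real^'p^'x" and Ew :: "real^'w^'x"
    and p :: "real^'q \<Rightarrow> real^'p"
    and K1 :: "real^'x^'u" and K2 :: "real^'p^'u" and L1 :: "real^'y^'q" and L2 :: "real^'y^'x"
    and P :: "real^('x + 'x)^('x + 'x)"
    and \<alpha>0 \<mu> \<omega>0 :: real
  assumes p_lip: "\<exists>Lp. Lp-lipschitz_on UNIV p"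
    and p0: "p 0 = 0"
    and \<omega>0_pos: "\<omega>0 > 0"
    and \<alpha>0_pos: "\<alpha>0 > 0"
    and \<mu>_pos: "\<mu> > 0"
    and P_sym: "transpose P = P"
    and P_pos: "\<forall>z. z \<noteq> 0 \<longrightarrow> z \<bullet> (P *v z) > 0"
    and lyap: "\<forall>x xh. let u = ctrl_input K1 K2 Cq p xh;
                          dx = plant_rhs A B E Ew Cq p x u 0;
                          dxh = obs_rhs A B C D Cq E p L1 L2 x xh u;
                          z = stack x (x - xh);
                          dz = stack dx (dx - dxh)
                      in dz \<bullet> (P *v z) + z \<bullet> (P *v dz) \<le> - \<alpha>0 * (z \<bullet> (P *v z))"
  shows "\<exists>\<tau>>0. \<exists>\<sigma>>0. \<exists>\<epsilon>>0. \<exists>\<beta>1 \<beta>2 d. class_KL \<beta>1 \<and> class_K \<beta>2 \<and> d \<ge> 0 \<and>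
           (\<forall>x xh xs tk w. et_solution A B C D Cq E Ew p K1 K2 L1 L2 \<tau> \<sigma> \<epsilon> \<omega>0 x xh xs tk w \<longrightarrow>
              (\<forall>t\<ge>0. norm (stack (x t) (x t - xh t))
                 \<le> \<beta>1 (norm (stack (x 0) (x 0 - xh 0))) t + \<beta>2 (SUP s\<in>{0..}. norm (w s)) + d))"
proof -
  obtain Lp where Lp: "Lp-lipschitz_on UNIV p" using p_lip by blast
  have Lp0: "0 \<le> Lp" using Lp by (simp add: lipschitz_on_def)
  obtain cm where cm: "cm \<ge> 1" "Lp \<le> cm" "\<forall>v. norm (A *v v) \<le> cm * norm v" "\<forall>v. norm (B *v v) \<le> cm * norm v"
     "\<forall>v. norm (C *v v) \<le> cm * norm v" "\<forall>v. norm (Cq *v v) \<le> cm * norm v"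
     "\<forall>v. norm (E *v v) \<le> cm * norm v" "\<forall>v. norm (Ew *v v) \<le> cm * norm v"
     "\<forall>v. norm (K1 *v v) \<le> cm * norm v" "\<forall>v. norm (K2 *v v) \<le> cm * norm v"
     "\<forall>v. norm (L1 *v v) \<le> cm * norm v" "\<forall>v. norm (L2 *v v) \<le> cm * norm v"
    using all_mat_bound[OF Lp0, of A B C Cq E Ew K1 K2 L1 L2] by blast
  have pl: "norm (p a - p b) \<le> cm * norm (a - b)" for a b
  proof -
    have "norm (p a - p b) \<le> Lp * norm (a - b)" by (rule lip_p[OF Lp])
    also have "\<dots> \<le> cm * norm (a - b)" using cm(2) by (intro mult_right_mono) auto
    finally show ?thesis .
  qed
  interpret bnds A B C D Cq E Ew p K1 K2 L1 L2 cm
    using cm pl p0 by unfold_locales auto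
  obtain m where m: "m > 0" "\<forall>v. m * (norm v)^2 \<le> v \<bullet> (P *v v)" using quad_lower[OF P_pos] by blast
  obtain M where M: "M > 0" "\<forall>v. v \<bullet> (P *v v) \<le> M * (norm v)^2 \<and> norm (P *v v) \<le> M * norm v"
    using quad_upper[of P] by blast
  define c2' where "c2' = 11 * cL^2"
  have c2'0: "c2' > 0" using cL_ge by (simp add: c2'_def)
  define \<theta> where "\<theta> = \<alpha>0 * m / (24 * M * cL^2)"
  have \<theta>0: "\<theta> > 0" using \<alpha>0_pos m M cL_ge by (simp add: \<theta>_def)
  have \<theta>s: "6 * M * cL^2 * \<theta> \<le> \<alpha>0 * m / 4" using M cL_ge by (simp add: \<theta>_def field_simps)
  define \<sigma> where "\<sigma> = \<theta> / 2"
  define \<epsilon> :: real where "\<epsilon> = 1"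
  define \<tau> where "\<tau> = min (1 / (4 * c2')) (\<theta> / (2 * c2'))"
  have \<tau>0: "\<tau> > 0" using c2'0 \<theta>0 by (simp add: \<tau>_def)
  have q1: "\<tau> * c2' \<le> 1/4"
  proof -
    have "\<tau> \<le> 1 / (4 * c2')" by (simp add: \<tau>_def)
    then show ?thesis using c2'0 by (simp add: field_simps)
  qed
  have q2: "\<tau> * c2' \<le> \<theta>/2"
  proof -
    have "\<tau> \<le> \<theta> / (2 * c2')" by (simp add: \<tau>_def)
    then show ?thesis using c2'0 by (simp add: field_simps)
  qed
  define \<kappa> where "\<kappa> = sqrt ((10 * M * cL^2)^2 / (\<alpha>0 * m) / ((\<alpha>0/2) * m))"
  have \<kappa>0: "0 \<le> \<kappa>" unfolding \<kappa>_def using \<alpha>0_pos m by simp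
  define \<beta>1 where "\<beta>1 = (\<lambda>r t. sqrt (M/m) * exp (- (\<alpha>0/4) * t) * r)"
  define \<beta>2 where "\<beta>2 = (\<lambda>r. (\<kappa> + 1) * r)"
  define d where "d = (\<kappa> + 1) * \<epsilon>"
  have \<sigma>0: "\<sigma> > 0" using \<theta>0 by (simp add: \<sigma>_def)
  have \<epsilon>0: "\<epsilon> > 0" by (simp add: \<epsilon>_def)
  have KL: "class_KL \<beta>1" unfolding \<beta>1_def using M m \<alpha>0_pos by (intro class_KL_exp) auto
  have K: "class_K \<beta>2" unfolding \<beta>2_def using \<kappa>0 by (intro class_K_lin) simp
  have d0: "0 \<le> d" using \<kappa>0 by (simp add: d_def \<epsilon>_def)
  have main: "\<forall>x xh xs tk w. et_solution A B C D Cq E Ew p K1 K2 L1 L2 \<tau> \<sigma> \<epsilon> \<omega>0 x xh xs tk w \<longrightarrow>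
              (\<forall>t\<ge>0. norm (stack (x t) (x t - xh t))
                 \<le> \<beta>1 (norm (stack (x 0) (x 0 - xh 0))) t + \<beta>2 (SUP s\<in>{0..}. norm (w s)) + d)"
  proof (intro allI impI)
    fix x xh xs :: "real \<Rightarrow> real^'x" and tk w and t :: real
    assume sol: "et_solution A B C D Cq E Ew p K1 K2 L1 L2 \<tau> \<sigma> \<epsilon> \<omega>0 x xh xs tk w" and t: "t \<ge> 0"
    define \<omega> where "\<omega> = (SUP s\<in>{0..}. norm (w s))"
    have wb0: "\<forall>s\<ge>0. norm (w s) \<le> \<omega>0" using sol by (simp add: et_solution_def)
    have bdd: "bdd_above ((\<lambda>s. norm (w s)) ` {0..})" using wb0 by (intro bdd_aboveI2[of _ _ \<omega>0]) auto
    have wb: "norm (w s) \<le> \<omega>" if "s \<ge> 0" for s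
      unfolding \<omega>_def by (rule cSUP_upper[OF _ bdd]) (use that in simp)
    interpret lyp A B C D Cq E Ew p K1 K2 L1 L2 cm \<tau> \<sigma> \<epsilon> \<omega> x xh xs tk w P \<alpha>0 M
    proof (unfold_locales)
      show "\<tau> > 0" by (rule \<tau>0)
    qed (use sol wb M P_sym lyap in \<open>auto simp: et_solution_def\<close>)
    have c2eq: "c2 = c2'" by (simp add: c2_def c2'_def)
    have fb: "norm (z t) \<le> sqrt (M/m) * exp (- (\<alpha>0/4) * t) * norm (z 0) + \<kappa> * (\<epsilon> + \<omega>)"
      unfolding \<kappa>_def
      by (rule final_bound[OF \<alpha>0_pos m(1) _ \<theta>0 \<theta>s _ _ _ _ _ t])
         (use m(2) \<theta>0 q1 q2 c2eq in \<open>auto simp: \<sigma>_def \<epsilon>_def\<close>)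
    have \<omega>0': "0 \<le> \<omega>" using wb[of 0] by (meson norm_ge_zero order_trans order_refl)
    have "\<kappa> * (\<epsilon> + \<omega>) \<le> (\<kappa> + 1) * \<omega> + (\<kappa> + 1) * \<epsilon>"
      using \<kappa>0 \<omega>0' by (simp add: \<epsilon>_def algebra_simps)
    then show "norm (stack (x t) (x t - xh t))
       \<le> \<beta>1 (norm (stack (x 0) (x 0 - xh 0))) t + \<beta>2 (SUP s\<in>{0..}. norm (w s)) + d"
      using fb unfolding \<beta>1_def \<beta>2_def d_def \<omega>_def[symmetric] z_def by linarith
  qed
  show ?thesis
    apply (rule exI[of _ \<tau>], rule conjI, fact \<tau>0)
    apply (rule exI[of _ \<sigma>], rule conjI, fact \<sigma>0)
    apply (rule exI[of _ \<epsilon>], rule conjI, fact \<epsilon>0)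
    apply (rule exI[of _ \<beta>1], rule exI[of _ \<beta>2], rule exI[of _ d])
    using KL K d0 main by blast
qed

end
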